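(* $F_v(J_5,J_5;5)\le 36$.
   Context: All graphs are finite and simple. $J_n$ denotes $K_n$ with one edge removed. "A graph $F$ contains $H$" means $F$ has a (not necessarily induced) subgraph isomorphic to $H$. $G\rightarrow(H_1,H_2)^v$ means: for every partition $V(G)=X_1\cup X_2$ there is $i$ such that the subgraph induced by $X_i$ contains $H_i$. $F_v(H_1,H_2;k)$ is the minimum number of vertices of a $K_k$-free graph $G$ with $G\rightarrow(H_1,H_2)^v$. *)

theory Defs
  imports Main
begin

type_synonym graph = "nat set \<times> nat set set"

definition simple_graph :: "graph \<Rightarrow> bool" where
  "simple_graph G \<longleftrightarrow> finite (fst G) \<and> (\<forall>e\<in>snd G. e \<subseteq> fst G \<and> card e = 2)"

text \<open>F contains H: H is isomorphic to a (not necessarily induced) subgraph of F.\<close>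
definition contains :: "graph \<Rightarrow> graph \<Rightarrow> bool" where
  "contains F H \<longleftrightarrow> (\<exists>f. inj_on f (fst H) \<and> f ` fst H \<subseteq> fst F \<and>
      (\<forall>e\<in>snd H. f ` e \<in> snd F))"

definition induced :: "graph \<Rightarrow> nat set \<Rightarrow> graph" where
  "induced G X = (X, {e\<in>snd G. e \<subseteq> X})"

definition complete :: "nat \<Rightarrow> graph" where
  "complete n = ({0..<n}, {e. e \<subseteq> {0..<n} \<and> card e = 2})"

definition J :: "nat \<Rightarrow> graph" where
  "J n = ({0..<n}, {e. e \<subseteq> {0..<n} \<and> card e = 2} - {{0, 1}})"

definition vertex_arrows :: "graph \<Rightarrow> graph \<Rightarrow> graph \<Rightarrow> bool" where
  "vertex_arrows G H1 H2 \<longleftrightarrow> (\<forall>X1 X2. X1 \<union> X2 = fst G \<and> X1 \<inter> X2 = {} \<longrightarrow>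
      contains (induced G X1) H1 \<or> contains (induced G X2) H2)"

definition Fv :: "graph \<Rightarrow> graph \<Rightarrow> nat \<Rightarrow> nat" where
  "Fv H1 H2 k = (LEAST n. \<exists>G. simple_graph G \<and> card (fst G) = n \<and>
      \<not> contains G (complete k) \<and> vertex_arrows G H1 H2)"

end

theory Submission
  imports Defs
begin

definition inD :: "nat \<Rightarrow> bool" where "inD d = (if d < 18 then (if d < 9 then (if d < 4 then (if d < 2 then (if d < 1 then False else True) else True) else (if d < 6 then False else (if d < 7 then False else True))) else (if d < 13 then (if d < 11 then (if d < 10 then False else True) else (if d < 12 then False else True)) else (if d < 15 then (if d < 14 then True else False) else (if d < 16 then True else (if d < 17 then False else True))))) else (if d < 27 then (if d < 22 then (if d < 20 then True else (if d < 21 then False else True)) else (if d < 24 then (if d < 23 then False else True) else (if d < 25 then True else (if d < 26 then False else True)))) else (if d < 31 then (if d < 29 then (if d < 28 then False else True) else (if d < 30 then True else False)) else (if d < 33 then False else True))))"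

definition adjb :: "nat \<Rightarrow> nat \<Rightarrow> bool" where
  "adjb i j = inD (if i \<le> j then j - i else i - j)"

definition Dl :: "nat list" where "Dl = [1, 2, 3, 7, 8, 10, 12, 13, 15, 17, 18, 19, 21, 23, 24, 26, 28, 29, 33, 34, 35]"

datatype cert = L "nat list" | S nat cert cert

fun isJ5 :: "nat list \<Rightarrow> bool" where
  "isJ5 [a,b,c,d,e] = (a \<noteq> b \<and> a < 36 \<and> b < 36 \<and> c < 36 \<and> d < 36 \<and> e < 36 \<and>
     adjb a c \<and> adjb a d \<and> adjb a e \<and> adjb b c \<and> adjb b d \<and> adjb b e \<and>
     adjb c d \<and> adjb c e \<and> adjb d e)"
| "isJ5 _ = False"

fun mem :: "nat \<Rightarrow> nat list \<Rightarrow> bool" where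
  "mem v [] = False" | "mem v (x#xs) = (v = x \<or> mem v xs)"

fun chk :: "nat list \<Rightarrow> nat list \<Rightarrow> cert \<Rightarrow> bool" where
  "chk R B (L cl) = (isJ5 cl \<and> (list_all (\<lambda>v. mem v R) cl \<or> list_all (\<lambda>v. mem v B) cl))"
| "chk R B (S v t1 t2) = (chk (v#R) B t1 \<and> chk R (v#B) t2)"

definition C0 :: cert where "C0 = S 3 (S 19 (L[3,19,0,1,2]) (S 13 (L[2,13,0,1,3]) (S 18 (L[2,18,0,1,3]) (S 29 (L[2,29,0,1,3]) (S 10 (L[1,10,0,2,3]) (S 15 (L[1,15,0,2,3]) (S 21 (L[1,21,0,2,3]) (S 26 (L[1,26,0,2,3]) (S 20 (L[0,20,1,2,3]) (S 8 (S 11 (S 23 (S 16 (S 31 (S 33 (S 5 (L[5,16,23,31,33]) (S 34 (L[0,11,1,8,34]) (L[15,26,5,13,34]))) (L[19,33,18,20,21])) (L[20,31,18,19,21])) (L[18,29,16,19,26])) (L[10,21,13,20,23])) (L[21,26,11,18,19])) (L[10,21,8,18,20]))))))))))) (S 19 (S 35 (L[19,35,0,1,2]) (S 18 (L[2,18,0,1,19]) (S 12 (L[1,12,0,2,19]) (S 17 (L[1,17,0,2,19]) (S 21 (L[1,21,0,2,19]) (S 26 (L[1,26,0,2,19]) (S 9 (L[0,9,1,2,19]) (S 20 (L[0,20,1,2,19]) (S 5 (S 11 (S 10 (S 31 (S 13 (S 28 (L[2,13,5,28,31]) (S 7 (S 33 (L[0,31,7,10,33]) (S 30 (S 32 (L[1,32,11,13,30])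 (L[17,33,9,32,35])) (L[30,35,9,12,33]))) (L[26,35,7,9,28]))) (L[13,18,3,20,21])) (L[20,31,3,18,21])) (L[10,21,3,18,20])) (L[21,26,3,11,18])) (L[20,26,3,5,18])))))))))) (S 35 (S 18 (L[2,18,0,1,35]) (S 12 (L[1,12,0,2,35]) (S 17 (L[1,17,0,2,35]) (S 28 (L[1,28,0,2,35]) (S 9 (L[0,9,1,2,35]) (S 14 (L[0,14,1,2,35]) (S 20 (L[0,20,1,2,35]) (S 25 (L[0,25,1,2,35]) (S 7 (S 10 (S 22 (S 15 (S 30 (S 32 (S 4 (L[4,15,22,30,32]) (S 33 (L[10,15,0,7,33]) (L[14,25,4,12,33]))) (L[18,32,17,19,20])) (L[19,30,17,18,20])) (L[17,28,15,18,25])) (L[9,20,12,19,22])) (L[20,25,10,17,18])) (L[9,20,7,17,19])))))))))) (S 4 (S 14 (S 25 (L[14,25,1,2,4]) (S 22 (L[2,22,1,4,14]) (S 27 (L[2,27,1,4,14]) (S 12 (L[1,12,2,4,14]) (L[22,27,12,25,35]))))) (S 25 (S 22 (L[2,22,1,4,25]) (S 27 (L[2,27,1,4,25]) (S 12 (L[1,12,2,4,25]) (L[22,27,12,14,35])))) (S 30 (S 9 (L[4,9,1,2,30]) (S 11 (L[2,11,1,4,30]) (S 12 (L[1,12,2,4,30]) (L[19,35,9,11,12])))) (S 27 (S 7 (S 10 (S 17 (L[2,7,0,10,17]) (S 28 (L[2,7,0,10,28]) (S 18 (S 33 (L[7,18,0,10,33]) (S 12 (S 23 (L[12,23,0,2,10])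 (S 15 (L[10,15,0,2,12]) (S 13 (L[2,13,0,10,12]) (L[25,30,13,15,23])))) (L[14,25,12,33,35]))) (L[17,28,18,25,35])))) (S 15 (S 17 (L[2,7,0,15,17]) (S 28 (L[2,7,0,15,28]) (S 18 (S 8 (L[7,18,0,8,15]) (S 33 (L[7,18,0,15,33]) (S 23 (S 12 (L[12,23,0,2,15]) (L[10,35,12,25,33])) (L[8,33,10,23,25])))) (L[17,28,10,18,25])))) (S 23 (S 21 (L[0,4,2,21,23]) (S 24 (S 26 (L[2,24,0,23,26]) (S 34 (L[0,27,1,24,34]) (S 11 (S 9 (L[11,27,1,9,24]) (S 6 (S 16 (S 31 (L[6,31,16,23,24]) (S 18 (S 29 (S 8 (L[18,29,0,1,8]) (L[8,19,21,31,34])) (L[29,34,19,21,31])) (L[3,19,18,21,31]))) (L[9,34,16,19,26])) (L[9,34,6,19,21]))) (L[21,26,11,19,34])))) (S 11 (S 31 (S 5 (L[4,31,2,5,23]) (S 13 (S 26 (L[2,13,0,23,26]) (S 34 (L[0,11,1,13,34]) (L[3,34,5,24,26]))) (S 26 (S 18 (S 16 (S 28 (L[26,31,16,18,28]) (L[3,28,5,13,15])) (L[5,16,3,13,15])) (L[13,18,3,5,15])) (L[15,26,3,5,13])))) (L[3,14,21,24,31])) (L[3,14,11,21,24])))) (S 8 (S 22 (S 33 (S 26 (L[8,33,0,7,26]) (S 29 (L[0,27,1,8,29]) (S 11 (S 5 (L[22,33,4,5,7]) (S 18 (L[0,11,1,8,18]) (L[15,26,3,5,18]))) (L[10,26,3,11,29]))))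 (L[25,30,15,23,33])) (L[25,30,15,22,23])) (L[10,15,8,23,25]))))) (S 6 (S 17 (S 22 (S 9 (S 24 (L[22,27,1,9,24]) (S 10 (L[0,9,2,10,17]) (S 26 (S 28 (L[2,27,9,26,28]) (L[10,35,7,25,28])) (L[14,25,7,24,26])))) (S 28 (S 10 (L[17,28,0,2,10]) (S 15 (L[17,28,0,2,15]) (S 5 (L[17,28,2,4,5]) (S 21 (L[0,4,2,21,28]) (S 8 (S 29 (L[1,6,8,27,29]) (S 34 (L[1,6,8,27,34]) (S 11 (S 31 (S 18 (L[0,11,1,8,18]) (S 13 (S 26 (S 16 (L[26,31,13,16,28]) (L[5,16,3,15,18])) (L[15,26,3,5,18])) (L[13,18,3,5,15]))) (L[29,34,19,21,31])) (L[9,29,11,19,21])))) (L[9,25,7,8,10])))))) (L[30,35,7,9,28]))) (L[14,25,7,22,35])) (L[14,25,7,17,35])) (L[14,25,6,7,35]))) (S 12 (S 17 (S 10 (L[12,17,0,2,10]) (S 15 (L[12,17,0,2,15]) (S 5 (L[12,17,2,4,5]) (S 8 (S 28 (S 21 (L[0,4,2,21,28]) (S 11 (S 18 (L[0,11,1,8,18]) (S 13 (S 26 (S 31 (S 16 (L[26,31,13,16,28]) (L[5,16,3,15,18])) (L[15,31,3,5,18])) (L[15,26,3,5,18])) (L[13,18,3,5,15]))) (S 29 (S 18 (L[18,29,0,1,8]) (L[10,21,3,11,18])) (L[11,27,3,10,29])))) (L[25,30,15,27,28])) (L[10,15,8,25,27]))))) (L[14,25,17,27,35])) (L[14,25,12,27,35]))))))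 (S 6 (S 11 (S 8 (S 18 (L[0,11,1,8,18]) (S 29 (L[0,11,1,8,29]) (S 26 (S 23 (L[2,8,0,23,26]) (S 9 (L[1,26,8,9,11]) (S 25 (S 28 (L[0,25,2,26,28]) (S 7 (L[6,26,7,8,25]) (S 10 (S 20 (S 27 (L[20,25,8,10,27]) (L[7,27,9,28,35])) (L[9,20,7,28,35])) (L[10,35,7,9,28])))) (S 33 (S 7 (L[8,33,0,7,26]) (S 17 (S 28 (S 13 (L[0,11,13,26,28]) (S 15 (L[17,28,0,2,15]) (S 5 (L[0,5,2,26,28]) (L[13,18,3,5,15])))) (L[4,35,7,25,28])) (L[19,25,4,7,17]))) (L[4,35,23,25,33]))))) (S 5 (S 16 (S 23 (L[5,16,6,8,23]) (S 9 (L[1,6,8,9,16]) (S 27 (S 25 (L[1,6,8,25,27]) (S 28 (S 15 (L[0,5,2,15,28]) (S 13 (S 31 (L[5,16,13,28,31]) (S 21 (L[2,13,0,21,28]) (L[3,19,18,21,31]))) (L[15,26,13,23,25]))) (L[26,35,18,25,28]))) (L[9,29,19,26,27])))) (L[18,29,3,16,26])) (L[18,29,3,5,26]))))) (S 22 (S 24 (S 9 (L[11,22,1,9,24]) (S 14 (L[11,22,1,14,24]) (S 34 (L[0,11,1,24,34]) (S 26 (S 23 (L[2,24,0,23,26]) (S 12 (S 25 (L[1,12,22,24,25]) (S 33 (S 7 (L[24,33,0,7,26]) (S 10 (L[2,33,0,10,12]) (S 15 (L[2,33,0,12,15]) (S 5 (S 20 (L[2,22,5,12,20]) (L[9,20,7,8,10]))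 (L[7,23,5,8,15]))))) (L[4,35,23,25,33]))) (S 27 (S 33 (S 25 (L[1,6,24,25,27]) (S 7 (L[24,33,0,7,26]) (S 17 (S 10 (S 28 (S 15 (S 13 (L[0,11,10,13,28]) (S 20 (L[2,27,10,17,20]) (S 30 (L[2,27,15,17,30]) (L[12,23,13,20,30])))) (L[7,23,8,15,25])) (L[4,35,7,25,28])) (L[9,25,7,8,10])) (L[14,19,4,7,17])))) (L[4,35,12,14,33])) (L[14,19,4,12,27])))) (S 7 (S 16 (S 5 (L[6,22,5,7,24]) (S 23 (S 13 (L[13,24,6,16,23]) (L[3,34,5,13,26])) (L[23,34,5,8,26]))) (L[9,34,8,16,26])) (L[8,19,7,9,26])))))) (S 30 (S 9 (L[2,11,1,9,30]) (S 20 (L[2,22,1,20,30]) (S 18 (S 13 (L[13,18,1,11,30]) (S 28 (L[1,28,11,18,30]) (S 21 (S 5 (S 7 (S 10 (S 23 (L[10,21,0,2,23]) (S 33 (L[7,18,0,10,33]) (S 15 (L[5,30,7,15,22]) (S 12 (S 25 (L[0,25,2,10,12]) (L[23,28,13,15,25])) (L[9,20,12,33,35]))))) (L[3,28,10,13,20])) (L[9,20,7,28,35])) (L[3,28,5,13,20])) (L[3,28,13,20,21])))) (S 10 (S 17 (S 28 (L[17,28,0,2,10]) (S 15 (L[10,15,0,2,17]) (S 7 (L[2,7,0,10,17]) (S 25 (L[0,25,2,10,17]) (L[8,28,7,15,25]))))) (L[19,35,17,18,20])) (L[3,8,10,18,20]))))) (S 27 (S 17 (S 10 (S 28 (L[17,28,0,2,10])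 (S 7 (L[2,7,0,10,17]) (S 25 (L[0,25,2,10,17]) (L[25,30,4,7,28])))) (S 15 (S 28 (L[17,28,0,2,15]) (S 7 (L[2,7,0,15,17]) (S 5 (L[0,5,2,15,17]) (S 25 (L[0,25,2,15,17]) (L[5,25,4,7,28]))))) (S 7 (S 18 (S 23 (S 13 (S 26 (L[2,13,0,23,26]) (S 34 (L[0,11,1,13,34]) (S 5 (S 16 (L[5,16,6,13,23]) (L[15,26,8,16,34])) (L[15,26,5,8,34])))) (S 5 (S 20 (L[17,23,2,5,20]) (S 31 (S 28 (L[2,7,5,28,31]) (L[3,28,10,13,20])) (L[20,31,3,10,13]))) (S 26 (S 31 (S 16 (S 28 (L[26,31,16,18,28]) (L[3,28,5,13,15])) (L[5,16,3,13,15])) (L[15,31,3,5,13])) (L[15,26,3,5,13])))) (S 25 (S 33 (S 26 (L[7,18,25,26,33]) (S 5 (S 20 (L[2,7,5,17,20]) (S 31 (L[7,18,5,31,33]) (L[20,31,8,10,23]))) (L[15,26,5,8,23]))) (L[4,15,23,30,33])) (L[10,15,8,23,25]))) (S 5 (S 20 (L[2,7,5,17,20]) (L[3,8,10,18,20])) (L[3,8,5,15,18]))) (S 25 (S 28 (S 33 (S 26 (L[2,27,25,26,28]) (S 5 (S 9 (S 21 (L[2,11,9,21,28]) (S 20 (L[17,28,2,5,20]) (S 18 (S 31 (L[28,33,5,18,31]) (L[20,31,7,8,10])) (L[10,21,3,18,20])))) (L[10,26,7,8,9])) (L[15,26,5,7,8]))) (L[4,15,7,30,33])) (L[4,15,7,28,30]))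 (L[10,15,7,8,25]))))) (S 7 (S 32 (S 15 (S 28 (L[2,7,0,15,28]) (S 14 (L[7,32,14,15,22]) (S 25 (L[7,32,15,22,25]) (S 18 (S 33 (L[7,18,0,15,33]) (S 12 (S 23 (L[12,23,0,2,15]) (L[25,30,4,23,33])) (L[14,25,4,12,33]))) (L[17,28,18,25,35]))))) (S 5 (S 33 (S 20 (L[22,33,5,7,20]) (S 18 (S 10 (L[7,18,0,10,33]) (S 31 (L[7,18,5,31,33]) (S 23 (S 29 (S 14 (L[1,32,11,14,29]) (S 21 (L[2,33,0,21,23]) (L[3,14,21,24,31]))) (L[3,8,10,29,31])) (L[20,31,8,10,23])))) (L[19,30,17,18,20]))) (S 12 (S 23 (S 10 (L[12,23,0,2,10]) (S 20 (L[12,23,2,5,20]) (S 31 (L[12,23,2,5,31]) (S 26 (L[0,5,2,23,26]) (S 13 (S 16 (L[5,16,6,13,23]) (L[26,31,3,16,24])) (L[20,31,3,10,13])))))) (L[4,15,23,30,33])) (L[4,15,12,30,33]))) (S 18 (S 34 (S 13 (L[1,32,11,13,34]) (S 28 (S 26 (L[0,11,18,26,28]) (L[15,26,3,5,13])) (L[5,30,13,15,28]))) (L[8,17,5,15,34])) (L[3,8,5,15,18])))) (L[19,30,4,17,32])) (L[19,30,4,7,17]))) (S 12 (S 17 (S 10 (L[12,17,0,2,10]) (S 15 (L[12,17,0,2,15]) (S 29 (S 14 (L[1,12,11,14,29]) (S 26 (S 28 (L[0,11,26,28,29]) (L[4,15,27,28,30])) (L[3,14,24,26,27]))) (L[3,8,10,27,29]))))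 (L[19,30,4,17,27])) (L[19,30,4,12,27]))))) (S 21 (S 9 (S 30 (L[2,11,1,9,30]) (S 7 (S 12 (S 24 (L[7,21,6,9,24]) (S 10 (L[2,11,9,10,12]) (S 5 (S 15 (L[0,5,2,12,15]) (S 23 (S 13 (L[2,13,0,21,23]) (S 20 (L[12,23,2,5,20]) (S 31 (L[12,23,2,5,31]) (L[20,31,3,10,13])))) (L[4,15,22,23,30]))) (L[4,24,3,5,22])))) (L[19,30,4,12,22])) (L[19,30,4,7,22]))) (S 12 (S 23 (S 10 (L[12,23,0,2,10]) (S 13 (L[2,13,0,21,23]) (S 20 (L[0,20,2,21,23]) (S 31 (L[0,31,2,21,23]) (L[20,31,3,10,13]))))) (S 5 (S 25 (S 10 (L[0,25,2,10,12]) (S 15 (L[0,5,2,12,15]) (S 20 (S 30 (L[5,30,2,12,20]) (L[4,15,22,23,30])) (L[3,23,10,20,22])))) (L[4,35,22,23,25])) (L[3,23,4,5,22]))) (L[19,35,9,12,22]))) (L[3,19,4,21,22])))) (S 21 (S 32 (S 29 (S 8 (L[1,21,0,8,29]) (S 28 (L[2,29,0,21,28]) (S 14 (L[21,32,6,14,29]) (S 12 (S 10 (L[2,29,0,10,12]) (S 9 (S 13 (S 23 (L[0,6,13,21,23]) (S 30 (L[1,12,2,9,30]) (L[23,28,4,11,30]))) (L[3,28,10,11,13])) (L[8,28,9,10,11]))) (L[4,35,11,12,14]))))) (S 12 (S 26 (S 23 (L[21,26,0,2,23]) (S 28 (L[21,26,0,2,28]) (S 10 (S 15 (L[10,15,0,2,12])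 (S 13 (L[2,13,0,10,12]) (S 25 (L[0,25,2,10,12]) (L[23,28,13,15,25])))) (L[3,28,10,11,29])))) (L[3,19,11,26,29])) (L[4,29,11,12,19]))) (L[3,19,4,11,32])) (L[3,19,4,11,21]))) (S 21 (S 27 (S 32 (S 23 (S 10 (L[10,21,0,2,23]) (S 13 (L[2,13,0,21,23]) (S 20 (L[0,20,2,21,23]) (S 31 (L[0,31,2,21,23]) (L[20,31,3,10,13]))))) (S 5 (S 25 (S 30 (S 9 (L[2,27,1,9,30]) (S 20 (L[2,27,1,20,30]) (S 7 (S 10 (S 12 (L[0,25,2,10,12]) (S 33 (L[0,25,7,10,33]) (L[9,20,12,33,35]))) (S 13 (S 22 (S 11 (L[1,32,11,13,30]) (S 33 (S 29 (L[1,32,22,29,30]) (S 31 (L[13,33,30,31,32]) (L[11,31,3,10,29]))) (L[10,35,20,23,33]))) (L[3,23,10,20,22])) (L[3,23,10,13,20]))) (L[19,35,6,7,9])))) (S 7 (S 11 (S 22 (S 33 (S 20 (L[22,33,5,7,20]) (S 13 (S 10 (L[22,33,7,10,25]) (S 28 (L[0,11,13,21,28]) (S 18 (S 31 (L[0,31,18,21,33]) (S 29 (S 8 (L[18,29,0,1,8]) (L[20,31,8,10,23])) (L[10,30,28,29,31]))) (L[10,30,18,20,28])))) (L[4,13,6,23,30]))) (L[6,33,4,23,30])) (L[6,22,4,23,30])) (L[6,11,4,23,30])) (L[19,30,4,6,7]))) (L[4,35,6,23,25])) (L[3,23,4,5,6]))) (L[3,19,4,6,32])) (L[3,19,4,6,27]))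 (L[3,19,4,6,21]))))))"
lemma P0: "chk [2, 1, 0] [] C0"
  unfolding C0_def by (simp add: adjb_def inD_def)

definition C1 :: cert where "C1 = S 13 (S 24 (L[13,24,0,1,3]) (S 34 (L[3,34,0,1,13]) (S 21 (L[1,21,0,3,13]) (S 26 (L[1,26,0,3,13]) (S 11 (L[0,11,1,3,13]) (L[21,26,11,24,34])))))) (S 18 (S 29 (L[18,29,0,1,3]) (S 8 (L[3,8,0,1,18]) (S 10 (L[1,10,0,3,18]) (S 21 (L[1,21,0,3,18]) (S 11 (L[0,11,1,3,18]) (L[10,21,8,11,29])))))) (S 24 (S 34 (L[3,34,0,1,24]) (S 21 (L[1,21,0,3,24]) (S 26 (L[1,26,0,3,24]) (S 11 (L[0,11,1,3,24]) (L[21,26,11,13,34]))))) (S 29 (S 8 (L[3,8,0,1,29]) (S 10 (L[1,10,0,3,29]) (S 21 (L[1,21,0,3,29]) (S 11 (L[0,11,1,3,29]) (L[10,21,8,11,18]))))) (S 4 (S 11 (S 22 (L[11,22,1,3,4]) (S 14 (L[3,14,1,4,11]) (S 21 (L[1,21,3,4,11]) (L[24,29,14,21,22])))) (S 14 (S 16 (L[3,14,1,4,16]) (S 6 (S 21 (L[3,14,4,6,21]) (S 32 (L[3,14,4,6,32]) (S 8 (S 34 (S 19 (L[8,19,0,1,34]) (L[18,29,11,19,21])) (L[21,32,11,13,34])) (L[18,29,8,11,21])))) (S 8 (S 19 (S 34 (L[8,19,0,1,34]) (L[13,24,6,16,34])) (L[18,29,6,16,19])) (L[18,29,6,8,16]))))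 (S 21 (S 32 (S 6 (L[21,32,3,4,6]) (S 16 (S 27 (L[16,27,1,3,4]) (L[24,29,6,14,27])) (L[13,24,6,14,16]))) (L[13,24,11,14,32])) (L[13,24,11,14,21])))) (S 5 (S 20 (S 22 (L[1,5,3,20,22]) (S 25 (S 27 (S 19 (L[3,19,1,20,27]) (S 30 (L[3,30,1,20,27]) (S 17 (S 7 (S 15 (L[15,20,5,7,17]) (S 28 (L[17,28,5,7,20]) (S 33 (L[17,33,5,7,20]) (L[28,33,15,18,30])))) (L[19,30,4,7,22])) (L[19,30,2,4,17])))) (S 14 (S 30 (S 7 (S 17 (L[5,30,7,17,20]) (S 28 (L[5,30,7,20,28]) (S 10 (S 19 (S 8 (L[0,20,7,8,10]) (S 26 (S 34 (L[7,34,0,19,26]) (S 6 (S 9 (L[6,26,7,9,19]) (S 16 (S 35 (L[1,6,14,16,35]) (L[24,35,9,17,27])) (L[16,27,9,17,24]))) (L[29,34,6,8,27]))) (L[8,28,26,27,29]))) (L[4,29,17,19,27])) (L[17,28,10,27,29])))) (S 9 (S 32 (S 17 (L[9,20,17,30,32]) (S 19 (S 6 (L[19,30,6,9,32]) (S 34 (S 8 (L[8,19,0,1,34]) (S 16 (L[9,34,1,16,19]) (L[18,29,6,8,16]))) (L[6,17,24,27,34]))) (L[17,22,4,7,19]))) (S 19 (S 11 (L[19,30,1,9,11]) (S 34 (S 8 (L[8,19,0,1,34]) (S 21 (L[1,21,0,19,34]) (S 26 (L[1,26,0,19,34]) (L[21,26,8,11,18])))) (L[13,24,11,32,34]))) (L[7,32,4,19,22])))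 (S 6 (S 35 (S 17 (S 32 (L[6,17,14,32,35]) (L[7,32,9,22,24])) (L[17,22,7,9,24])) (L[24,35,7,9,22])) (L[7,27,6,9,24])))) (S 12 (S 17 (S 23 (S 28 (S 7 (L[17,28,5,7,20]) (S 33 (L[12,23,5,20,33]) (S 15 (S 32 (L[14,25,15,17,32]) (L[4,29,22,30,32])) (L[22,33,7,15,30])))) (L[2,27,4,28,30])) (L[2,22,4,23,30])) (L[2,27,4,17,30])) (L[2,22,4,12,30]))) (S 17 (S 7 (S 15 (L[0,5,7,15,17]) (S 30 (L[5,30,7,17,20]) (S 28 (L[17,28,5,7,20]) (L[2,13,15,28,30])))) (L[4,24,7,14,22])) (L[2,27,4,14,17])))) (S 12 (S 23 (S 33 (L[12,23,5,20,33]) (S 7 (S 32 (S 8 (L[7,23,5,8,20]) (S 10 (S 27 (L[3,12,10,20,27]) (S 15 (S 17 (S 30 (L[15,20,17,30,32]) (S 28 (L[17,28,0,7,10]) (L[4,29,27,28,30]))) (L[4,24,17,25,27])) (L[8,33,15,18,25]))) (L[8,33,10,18,25]))) (L[4,24,22,25,32])) (L[4,24,7,22,25]))) (L[2,22,4,23,25])) (L[2,22,4,12,25])))) (S 17 (S 21 (S 28 (S 7 (S 10 (L[17,28,0,7,10]) (S 35 (L[17,28,0,7,35]) (S 23 (S 33 (S 31 (L[0,31,21,23,33]) (S 8 (L[8,33,0,21,23]) (L[20,31,8,10,18]))) (L[10,35,18,20,33])) (L[10,35,2,20,23])))) (S 10 (S 35 (S 34 (L[10,35,0,17,34]) (S 14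 (S 16 (L[1,17,14,16,35]) (S 6 (S 32 (L[6,17,14,32,35]) (S 11 (S 9 (L[9,14,1,11,35]) (S 22 (L[11,22,1,14,35]) (L[7,32,9,22,24]))) (L[13,24,11,32,34]))) (L[13,24,6,16,34]))) (S 22 (S 12 (S 33 (L[10,35,0,12,33]) (S 15 (L[3,12,5,15,22]) (L[4,15,7,14,33]))) (S 25 (S 27 (L[17,28,10,25,27]) (L[2,27,4,12,14])) (L[14,25,2,4,12]))) (L[4,24,7,14,22])))) (S 33 (S 23 (L[10,21,0,23,33]) (S 12 (S 25 (L[0,25,10,12,33]) (L[4,35,2,23,25])) (L[12,23,2,20,35]))) (L[7,18,20,33,35]))) (S 8 (S 23 (S 33 (L[8,33,0,21,23]) (L[7,18,10,20,33])) (L[2,13,10,20,23])) (L[7,18,8,10,20])))) (S 30 (S 10 (S 35 (S 7 (L[10,35,0,7,17]) (S 34 (L[10,35,0,17,34]) (S 25 (S 27 (L[10,35,17,25,27]) (S 6 (S 32 (L[6,17,25,32,35]) (S 11 (S 9 (L[30,35,1,9,11]) (S 22 (S 12 (L[10,35,12,22,25]) (S 14 (L[11,22,1,14,35]) (L[9,14,12,24,27]))) (L[7,32,9,22,24]))) (L[13,24,11,32,34]))) (S 19 (S 9 (S 16 (L[19,35,9,16,17]) (L[13,24,6,16,34])) (L[7,27,6,9,24])) (L[7,27,4,6,19])))) (L[2,7,4,25,28])))) (L[2,18,20,28,35])) (L[2,13,10,20,28])) (L[4,20,2,28,30]))) (S 19 (S 23 (S 34 (L[1,17,0,19,34]) (S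 6 (S 31 (S 8 (L[6,31,5,8,23]) (S 10 (S 33 (L[0,31,10,23,33]) (L[8,33,18,20,21])) (L[10,21,8,18,20]))) (L[13,24,21,31,34])) (L[13,24,6,21,34]))) (L[4,20,2,21,23])) (L[4,20,2,19,21]))) (S 19 (S 10 (S 35 (S 34 (L[19,35,0,1,34]) (S 7 (S 28 (L[10,35,0,7,28]) (S 25 (S 8 (L[0,25,7,8,10]) (S 22 (L[10,35,7,22,25]) (S 32 (S 6 (L[7,32,6,25,35]) (S 27 (S 12 (L[10,35,12,25,27]) (S 16 (S 14 (L[16,27,1,14,35]) (L[12,17,2,4,14])) (L[6,17,16,24,34]))) (L[8,24,6,27,34]))) (L[17,22,24,32,34])))) (L[17,28,2,4,25]))) (S 14 (S 25 (S 22 (L[14,25,1,22,35]) (S 27 (L[14,25,1,27,35]) (S 9 (S 16 (L[19,35,1,9,16]) (L[16,27,17,24,34])) (L[17,22,7,9,24])))) (L[2,7,4,17,25])) (L[2,7,4,14,17])))) (L[2,18,17,20,35])) (L[2,18,10,17,20])) (L[4,20,2,17,19])))) (S 6 (S 12 (S 17 (S 19 (S 34 (L[1,17,0,19,34]) (S 26 (S 31 (S 7 (L[17,26,0,7,19]) (S 22 (S 20 (L[1,12,19,20,22]) (S 23 (S 8 (S 10 (L[0,31,8,10,23]) (S 21 (L[0,6,8,21,23]) (S 11 (L[0,11,8,23,26]) (L[10,21,11,13,34])))) (L[7,18,5,8,20])) (L[4,20,2,5,23]))) (L[4,24,5,7,22]))) (L[13,24,5,31,34])) (L[13,24,5,26,34])))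 (S 20 (S 21 (S 22 (L[1,21,3,20,22]) (S 23 (S 7 (S 10 (L[0,20,7,10,17]) (S 8 (L[0,6,8,21,23]) (S 33 (L[0,20,21,23,33]) (S 15 (S 25 (L[0,25,7,15,17]) (L[8,33,10,18,25])) (L[8,33,5,15,18]))))) (L[5,19,4,7,22])) (L[2,22,4,5,23]))) (S 14 (S 23 (S 28 (S 9 (S 31 (S 11 (S 22 (S 30 (L[1,12,9,11,30]) (S 32 (L[1,32,3,20,22]) (S 7 (S 15 (L[17,28,0,7,15]) (S 33 (L[7,12,14,31,33]) (L[5,30,15,18,33]))) (S 33 (S 15 (L[22,33,12,14,15]) (S 25 (S 16 (L[12,16,14,31,33]) (S 26 (L[0,25,23,26,33]) (L[18,29,16,19,26]))) (L[25,30,13,15,32]))) (L[5,30,4,7,33]))))) (L[2,22,4,19,21])) (L[2,11,4,19,21])) (L[4,31,2,19,21])) (L[4,9,2,19,21])) (L[19,28,2,4,21])) (L[19,23,2,4,21])) (L[14,19,2,4,21]))) (S 23 (S 28 (S 21 (S 8 (L[0,6,8,21,23]) (S 15 (S 31 (S 7 (S 10 (L[0,31,7,10,28]) (S 25 (L[0,25,7,15,17]) (L[20,25,8,10,18]))) (L[7,18,5,8,20])) (L[20,31,5,8,18])) (L[15,20,5,8,18]))) (L[4,20,2,19,21])) (L[4,20,2,5,28])) (L[4,20,2,5,23])))) (S 28 (S 25 (S 15 (S 7 (L[0,25,7,15,28]) (L[2,7,4,5,17])) (L[4,15,2,5,17])) (L[5,25,2,4,17])) (L[17,28,2,4,5])))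 (S 17 (S 23 (S 14 (S 25 (S 15 (S 20 (S 22 (S 8 (L[0,25,8,15,23]) (S 10 (L[3,23,10,20,22]) (S 27 (L[14,25,15,17,27]) (L[8,12,10,27,29])))) (L[2,22,4,5,12])) (L[4,20,2,5,12])) (L[4,15,2,5,12])) (L[5,25,2,4,12])) (L[5,14,2,4,12])) (L[12,23,2,4,5])) (L[12,17,2,4,5]))) (S 23 (S 8 (S 34 (S 19 (L[8,19,0,1,34]) (S 21 (L[23,34,0,8,21]) (S 16 (L[0,16,1,8,34]) (L[16,21,4,6,19])))) (L[13,24,5,6,34])) (L[18,29,5,6,8])) (L[2,6,4,5,23]))))))))"
lemma P1: "chk [3, 1, 0] [2] C1"
  unfolding C1_def by (simp add: adjb_def inD_def)

definition C2 :: cert where "C2 = S 6 (S 7 (S 23 (L[7,23,4,5,6]) (S 17 (L[6,17,4,5,7]) (S 22 (L[6,22,4,5,7]) (S 14 (L[5,14,4,6,7]) (S 25 (L[5,25,4,6,7]) (S 30 (L[5,30,4,6,7]) (S 24 (L[4,24,5,6,7]) (S 12 (S 27 (S 20 (S 35 (L[1,12,20,27,35]) (L[24,35,22,23,25])) (L[2,22,20,23,30])) (L[14,25,17,24,27])) (L[14,25,12,22,24]))))))))) (S 23 (S 22 (L[6,22,4,5,23]) (S 25 (L[5,25,4,6,23]) (S 30 (L[5,30,4,6,23]) (S 8 (L[4,8,5,6,23]) (S 13 (L[4,13,5,6,23]) (S 24 (L[4,24,5,6,23]) (S 9 (S 10 (S 14 (S 35 (S 17 (S 27 (L[10,35,9,17,27])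 (S 32 (L[6,17,9,32,35]) (S 11 (S 12 (L[1,12,11,14,35]) (L[22,27,12,24,25])) (L[3,30,11,13,32])))) (L[17,22,7,24,25])) (L[24,35,7,22,25])) (L[14,25,7,22,24])) (L[8,22,7,10,25])) (L[24,30,7,9,22])))))))) (S 27 (S 19 (L[1,6,4,19,27]) (S 25 (L[1,6,4,25,27]) (S 30 (L[1,6,4,27,30]) (S 15 (S 9 (S 8 (L[1,6,8,9,27]) (S 10 (S 26 (S 28 (L[10,26,9,27,28]) (S 35 (L[1,6,9,27,35]) (L[2,7,25,28,35]))) (L[7,23,8,25,26])) (L[7,23,8,10,25]))) (S 12 (S 22 (L[4,15,5,12,22]) (L[19,30,7,9,22])) (L[19,30,2,9,12]))) (L[25,30,2,15,23]))))) (S 10 (S 8 (S 18 (L[1,10,0,8,18]) (S 29 (L[1,10,0,8,29]) (S 34 (L[1,10,0,8,34]) (S 9 (S 11 (L[1,10,8,9,11]) (S 21 (S 32 (L[21,32,6,8,9]) (S 19 (L[8,19,6,9,21]) (L[29,34,11,19,32]))) (L[18,29,3,11,21]))) (S 12 (S 30 (S 11 (L[1,12,4,11,30]) (S 22 (L[5,30,4,12,22]) (S 21 (S 32 (S 19 (L[21,32,4,6,19]) (S 17 (L[6,17,4,30,32]) (L[17,22,7,9,19]))) (L[11,22,3,29,32])) (L[18,29,3,11,21])))) (S 28 (S 13 (L[12,28,0,10,13]) (S 15 (S 33 (L[10,15,0,12,33]) (S 22 (L[4,15,5,12,22]) (L[22,33,7,9,30]))) (L[2,13,15,23,30]))) (L[2,7,9,28,30])))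 (S 19 (S 30 (S 11 (L[19,30,1,4,11]) (S 22 (L[19,30,1,4,22]) (S 21 (S 32 (L[21,32,4,6,19]) (L[11,22,3,29,32])) (L[18,29,3,11,21])))) (L[2,27,9,12,30])) (L[2,27,9,12,19]))))))) (S 26 (S 19 (S 18 (L[1,26,0,18,19]) (S 29 (L[1,26,0,19,29]) (S 11 (S 30 (L[19,30,1,4,11]) (S 22 (L[11,22,1,4,19]) (S 9 (L[4,9,1,11,19]) (S 12 (L[1,12,4,11,19]) (L[2,22,9,12,30]))))) (S 21 (S 32 (L[21,32,4,6,19]) (S 9 (L[4,9,6,19,21]) (L[9,29,8,11,32]))) (L[18,29,3,11,21]))))) (S 20 (S 9 (S 16 (S 14 (L[1,6,4,14,16]) (S 24 (L[1,6,9,16,24]) (S 35 (L[1,6,9,16,35]) (S 12 (S 22 (L[5,10,12,20,22]) (S 17 (S 32 (S 25 (L[6,17,4,25,32]) (L[24,35,22,23,25])) (L[7,32,14,22,24])) (L[7,27,14,17,24]))) (L[24,35,12,14,27]))))) (S 17 (S 18 (L[0,20,10,17,18]) (S 15 (S 34 (L[0,5,15,17,34]) (S 32 (S 14 (L[6,17,4,14,32]) (S 24 (L[6,17,9,24,32]) (S 35 (L[6,17,9,32,35]) (S 12 (S 33 (L[0,5,12,15,33]) (L[7,16,14,33,35])) (L[24,35,12,14,27]))))) (S 11 (S 24 (L[1,26,9,11,24]) (S 28 (L[10,26,9,11,28]) (S 22 (S 14 (L[11,22,1,4,14]) (S 35 (L[11,22,1,9,35]) (S 25 (S 12 (L[5,25,4,12,22])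 (L[24,35,12,14,27])) (L[23,28,2,25,35])))) (L[3,34,22,24,32])))) (L[8,19,11,32,34])))) (L[3,8,15,16,18]))) (S 29 (S 34 (S 24 (L[0,5,24,26,34]) (S 13 (L[1,10,0,13,34]) (S 31 (S 14 (S 21 (L[6,31,14,21,29]) (S 25 (S 22 (L[14,25,1,4,22]) (L[3,23,21,22,24])) (L[7,27,17,24,25]))) (L[7,16,14,17,24])) (L[13,24,3,16,31])))) (L[16,27,17,19,34])) (L[16,27,17,19,29])))) (S 12 (S 17 (S 22 (L[5,10,12,20,22]) (S 30 (S 35 (S 32 (L[30,35,17,20,32]) (L[7,32,9,19,22])) (L[19,35,7,9,22])) (L[19,30,7,9,22]))) (L[2,7,9,17,19])) (L[2,27,9,12,19]))) (S 12 (S 17 (S 29 (L[12,17,0,10,29]) (S 9 (S 33 (L[0,9,10,12,33]) (S 30 (S 35 (S 22 (L[30,35,1,9,22]) (S 32 (L[6,17,4,30,32]) (L[20,29,3,22,32]))) (L[2,33,20,23,35])) (L[2,33,20,23,30]))) (S 22 (S 25 (L[4,10,12,22,25]) (S 15 (L[4,15,5,12,22]) (L[2,8,15,23,25]))) (L[9,20,7,19,22])))) (L[2,7,17,19,20])) (L[2,27,12,19,20])))) (S 9 (S 29 (S 11 (S 14 (L[4,29,1,11,14]) (S 19 (L[4,9,1,11,19]) (S 12 (L[9,29,10,11,12]) (S 35 (S 24 (S 34 (L[24,35,0,1,34]) (L[8,19,26,27,34])) (L[7,27,14,24,26])) (L[2,27,12,14,35]))))) (S 24 (S 16 (L[1,6,9,16,24])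 (L[11,16,8,23,26])) (L[11,27,3,24,26]))) (L[3,8,26,27,29])) (L[7,27,8,9,26])))) (S 20 (S 31 (S 12 (S 13 (L[20,31,5,12,13]) (S 22 (L[4,20,5,12,22]) (S 33 (L[4,20,5,12,33]) (S 9 (S 11 (S 29 (S 14 (L[1,12,4,11,14]) (S 24 (L[24,29,5,12,31]) (S 35 (L[1,12,9,11,35]) (L[24,35,7,14,22])))) (L[22,27,3,10,29])) (L[3,23,10,11,13])) (L[22,33,7,9,10]))))) (S 9 (S 29 (S 8 (L[6,31,5,8,29]) (S 11 (S 14 (L[4,29,1,11,14]) (S 35 (S 24 (L[24,35,1,9,11]) (S 22 (L[11,22,1,9,35]) (L[22,27,12,14,24]))) (L[2,27,12,14,35]))) (S 34 (S 21 (S 13 (L[0,6,13,21,34]) (L[3,12,10,11,13])) (L[10,21,8,11,23])) (L[23,34,8,10,11])))) (L[3,12,10,27,29])) (L[2,27,9,10,12]))) (L[3,23,2,10,31])) (L[3,23,2,10,20])))))) (S 7 (S 17 (S 22 (L[17,22,4,5,7]) (S 28 (L[17,28,4,5,7]) (S 14 (L[5,14,4,7,17]) (S 25 (L[5,25,4,7,17]) (S 30 (L[5,30,4,7,17]) (S 15 (L[4,15,5,7,17]) (S 20 (L[4,20,5,7,17]) (S 12 (S 13 (S 23 (S 10 (L[12,23,0,10,13]) (L[3,28,2,10,20])) (L[25,30,15,22,23])) (L[25,30,13,15,28])) (L[2,22,12,14,15]))))))))) (S 22 (S 33 (L[22,33,4,5,7]) (S 12 (L[7,12,4,5,22]) (S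 23 (L[7,23,4,5,22]) (S 25 (L[5,25,4,7,22]) (S 30 (L[5,30,4,7,22]) (S 24 (L[4,24,5,7,22]) (S 35 (S 9 (L[1,7,9,22,35]) (L[2,33,9,12,30])) (L[24,35,6,23,25])))))))) (S 21 (S 8 (S 18 (L[1,21,0,8,18]) (S 29 (L[1,21,0,8,29]) (S 15 (L[0,5,7,8,15]) (S 26 (L[0,5,7,8,26]) (S 25 (S 30 (S 27 (L[25,30,1,4,27]) (L[6,26,3,27,29])) (L[2,18,15,17,30])) (L[2,18,15,17,25])))))) (S 24 (S 34 (L[1,21,0,24,34]) (S 26 (L[0,5,7,24,26]) (S 16 (S 27 (S 19 (L[16,27,1,4,19]) (S 9 (L[16,27,1,9,24]) (L[17,26,2,9,19]))) (L[6,26,8,27,34])) (L[6,26,8,16,34])))) (S 32 (S 26 (S 28 (L[4,26,5,7,28]) (S 9 (S 19 (L[0,9,7,19,26]) (S 27 (S 30 (L[4,9,1,27,30]) (S 20 (S 35 (L[9,20,1,27,35]) (S 25 (S 12 (L[1,12,4,25,27]) (S 14 (S 29 (L[1,26,14,27,29]) (L[19,30,12,22,29])) (L[24,35,12,14,22]))) (L[17,28,2,25,35]))) (L[19,30,2,17,20]))) (S 16 (S 29 (S 14 (L[1,26,14,16,29]) (L[3,14,6,24,27])) (L[24,29,3,6,27])) (L[16,27,3,6,24])))) (S 10 (S 30 (S 11 (L[1,32,4,11,30]) (S 27 (S 12 (S 25 (L[4,10,12,25,27]) (S 15 (L[4,15,12,27,30]) (S 23 (S 13 (L[12,23,0,10,13])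 (L[2,13,15,25,28])) (L[2,8,15,23,25])))) (L[11,22,9,12,24])) (L[8,24,6,9,27]))) (L[17,28,2,9,30])) (L[17,28,2,9,10])))) (S 16 (S 27 (S 14 (L[16,27,1,4,14]) (S 19 (L[16,27,1,4,19]) (S 9 (S 11 (S 35 (L[11,16,1,9,35]) (S 12 (S 25 (L[1,12,4,25,27]) (L[14,25,2,17,35])) (L[12,17,2,14,35]))) (L[3,14,11,24,26])) (L[17,26,2,9,19])))) (L[6,26,3,24,27])) (L[6,26,3,16,24]))) (L[6,22,3,24,32])))) (S 20 (S 24 (S 28 (L[4,20,5,7,28]) (S 31 (S 8 (L[20,31,5,7,8]) (S 23 (L[7,23,5,24,31]) (S 34 (L[7,34,5,24,31]) (L[23,34,6,8,21])))) (L[3,28,2,21,31]))) (L[6,22,3,21,24])) (L[2,22,3,20,21]))))) (S 8 (S 11 (S 18 (L[0,11,1,8,18]) (S 29 (L[0,11,1,8,29]) (S 34 (L[0,11,1,8,34]) (S 21 (S 19 (L[1,21,4,11,19]) (S 27 (S 9 (L[1,21,8,9,11]) (S 30 (L[11,27,1,4,30]) (L[19,30,6,7,9]))) (L[29,34,6,19,27]))) (L[18,29,3,6,21]))))) (S 18 (S 10 (L[1,10,0,8,18]) (S 21 (L[1,21,0,8,18]) (S 20 (L[0,20,1,8,18]) (L[10,21,2,3,20])))) (S 21 (S 29 (L[1,21,0,8,29]) (S 16 (S 10 (S 26 (S 32 (S 9 (L[1,26,8,9,16]) (S 23 (L[0,5,8,23,26]) (S 13 (S 28 (L[10,21,0,13,28])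 (S 14 (L[4,13,1,14,16]) (S 27 (S 30 (S 20 (L[1,10,8,20,27]) (S 25 (L[1,10,8,25,27]) (S 15 (S 17 (L[13,17,15,30,32]) (S 19 (L[16,27,1,4,19]) (L[2,7,17,19,20]))) (L[2,7,15,25,28])))) (L[6,28,7,9,30])) (L[3,14,6,27,29])))) (S 30 (S 22 (L[1,32,4,22,30]) (S 19 (S 24 (S 14 (L[1,26,14,16,24]) (S 27 (L[16,27,1,4,19]) (L[3,14,6,27,29]))) (L[6,22,7,9,24])) (L[6,22,7,9,19]))) (L[6,11,13,23,30]))))) (L[6,11,3,29,32])) (L[18,29,3,11,26])) (L[18,29,3,10,11])) (L[18,29,3,6,16]))) (L[6,11,3,18,21])))) (S 9 (S 16 (S 19 (L[4,9,1,16,19]) (S 27 (S 14 (L[16,27,1,4,14]) (S 24 (L[16,27,1,9,24]) (S 35 (L[16,27,1,9,35]) (L[24,35,6,7,14])))) (S 29 (S 34 (S 14 (L[4,29,1,14,16]) (S 24 (L[9,34,1,16,24]) (S 35 (L[9,34,1,16,35]) (L[24,35,6,7,14])))) (L[8,19,6,27,34])) (L[3,8,6,27,29])))) (S 18 (S 29 (S 19 (L[18,29,0,1,19]) (S 34 (S 35 (L[18,34,0,1,35]) (S 25 (S 14 (S 23 (S 22 (L[14,25,1,4,22]) (S 27 (L[14,25,1,4,27]) (S 11 (L[4,29,1,11,14]) (S 24 (S 33 (L[5,25,4,23,33]) (S 26 (L[23,34,5,24,26]) (S 31 (L[23,34,5,24,31]) (S 10 (S 20 (S 13 (L[0,20,10,13,23])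 (S 28 (L[0,20,10,18,28]) (L[3,28,11,13,26]))) (L[19,35,7,20,22])) (L[8,33,7,10,31]))))) (L[16,27,3,6,24]))))) (L[8,35,6,16,23])) (L[7,16,6,14,35])) (L[8,35,6,7,25]))) (L[8,19,6,16,34]))) (L[3,8,6,16,29])) (L[3,8,6,16,18]))) (S 25 (S 24 (S 27 (S 26 (L[1,26,24,25,27]) (L[6,26,7,8,9])) (L[7,27,6,8,9])) (L[8,24,6,7,9])) (L[9,25,6,7,8])))))"
lemma P2: "chk [5, 4, 1, 0] [3, 2] C2"
  unfolding C2_def by (simp add: adjb_def inD_def)

definition C3 :: cert where "C3 = S 15 (S 20 (S 19 (S 18 (L[0,20,1,18,19]) (S 22 (L[4,20,1,19,22]) (S 26 (S 29 (L[1,26,0,19,29]) (S 6 (S 21 (S 32 (L[21,32,4,6,19]) (L[5,32,3,22,29])) (L[5,21,3,22,29])) (L[18,29,3,5,6]))) (L[2,18,3,5,26])))) (S 26 (S 31 (S 8 (S 7 (L[15,26,0,7,8]) (S 18 (L[1,15,0,8,18]) (S 23 (L[15,26,0,8,23]) (S 29 (L[1,26,0,8,29]) (S 34 (L[1,15,0,8,34]) (S 6 (S 10 (S 27 (L[1,10,8,20,27]) (S 17 (S 11 (S 9 (L[1,10,8,9,11]) (S 12 (S 33 (L[0,20,10,12,33]) (S 30 (L[1,12,4,11,30]) (S 22 (S 35 (L[10,35,12,20,22]) (L[30,35,7,9,33])) (L[19,30,7,9,22])))) (L[2,27,9,12,19]))) (S 21 (S 32 (S 12 (S 30 (L[4,15,17,30,32])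 (S 33 (L[10,15,0,12,33]) (S 9 (L[21,32,6,8,9]) (S 22 (S 35 (L[10,35,12,20,22]) (L[30,35,7,9,33])) (L[19,30,7,9,22]))))) (L[11,27,12,19,29])) (L[29,34,11,19,32])) (L[18,29,3,11,21]))) (L[29,34,17,19,27]))) (S 11 (S 22 (S 9 (L[1,26,8,9,11]) (S 28 (S 13 (L[0,11,13,26,28]) (S 12 (S 25 (L[1,12,4,22,25]) (L[2,13,10,23,25])) (L[10,19,2,9,12]))) (L[2,7,9,10,28]))) (L[5,10,3,22,29])) (L[18,29,3,10,11]))) (L[18,29,3,5,6]))))))) (S 18 (S 28 (L[15,26,0,18,28]) (S 33 (L[15,26,0,18,33]) (S 35 (L[0,20,1,18,35]) (S 7 (S 17 (L[7,18,0,15,17]) (S 9 (S 25 (S 22 (L[1,7,4,22,25]) (S 24 (L[0,9,7,24,26]) (S 6 (S 32 (L[7,32,4,6,25]) (L[5,32,3,22,24])) (L[6,22,3,5,24])))) (L[17,28,2,25,35])) (L[19,35,2,9,17]))) (S 9 (S 25 (S 17 (L[0,25,15,17,18]) (S 14 (S 22 (L[14,25,1,4,22]) (S 24 (S 16 (L[1,26,9,16,24]) (S 34 (L[1,26,0,24,34]) (L[19,35,16,17,34]))) (L[17,22,5,7,24]))) (L[17,33,7,14,35]))) (L[28,33,7,25,35])) (L[28,33,7,9,35])))))) (S 6 (S 13 (S 23 (L[15,26,0,13,23]) (S 28 (L[15,26,0,13,28]) (S 34 (L[1,15,0,13,34]) (S 25 (S 27 (L[1,6,4,25,27]) (S 32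 (L[4,13,6,25,32]) (S 11 (S 12 (L[0,25,12,13,15]) (S 14 (L[4,13,1,11,14]) (S 30 (L[4,13,1,11,30]) (S 9 (S 24 (L[1,26,9,11,24]) (S 22 (S 35 (L[11,22,1,9,35]) (L[24,35,12,14,27])) (L[22,27,12,14,24]))) (L[19,30,2,9,12]))))) (L[8,19,11,32,34])))) (S 10 (S 35 (S 12 (L[0,20,10,12,13]) (S 9 (S 22 (L[9,20,1,22,35]) (S 24 (S 32 (L[24,35,6,9,32]) (S 11 (L[1,26,9,11,24]) (L[8,19,11,32,34]))) (L[3,12,5,22,24]))) (S 30 (S 27 (L[1,6,4,27,30]) (L[2,27,9,12,19])) (L[19,30,2,9,12])))) (L[23,28,2,25,35])) (L[23,28,2,10,25])))))) (S 27 (S 30 (L[4,20,1,27,30]) (S 14 (L[1,6,4,14,27]) (S 25 (L[1,6,4,25,27]) (S 9 (S 35 (L[9,20,1,27,35]) (S 12 (S 17 (S 10 (L[12,17,9,10,27]) (S 33 (S 23 (L[12,23,0,15,33]) (L[2,8,10,23,25])) (L[8,33,10,18,25]))) (L[14,25,2,17,35])) (L[14,25,2,12,35]))) (S 12 (S 17 (S 10 (L[12,17,10,20,27]) (S 28 (S 7 (L[17,28,0,7,15]) (L[9,25,7,8,10])) (L[2,13,10,25,28]))) (L[19,30,2,9,17])) (L[19,30,2,9,12])))))) (S 10 (S 7 (S 17 (L[10,15,0,7,17]) (S 28 (L[10,15,0,7,28]) (S 9 (S 30 (L[4,9,6,7,30]) (S 24 (L[6,26,7,9,24]) (S 22 (L[9,20,7,10,22])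 (S 11 (S 34 (S 29 (S 14 (L[4,29,1,11,14]) (S 35 (L[9,34,1,11,35]) (S 25 (S 32 (L[7,32,4,6,25]) (L[5,32,3,22,24])) (L[14,25,2,17,35])))) (L[19,30,17,27,29])) (L[5,27,17,24,34])) (L[13,18,11,28,30]))))) (L[2,27,9,17,19])))) (S 34 (S 17 (L[10,15,0,17,34]) (S 24 (L[1,26,0,24,34]) (S 22 (S 14 (S 25 (L[14,25,1,4,22]) (L[5,25,7,17,24])) (L[5,14,7,17,24])) (L[17,22,5,7,24])))) (S 14 (S 16 (L[1,6,4,14,16]) (S 17 (S 32 (L[6,17,4,14,32]) (S 11 (S 29 (L[1,26,11,14,29]) (S 22 (L[11,22,1,4,14]) (L[29,34,19,22,32]))) (L[3,34,11,13,32]))) (L[18,34,16,17,19]))) (S 12 (S 33 (L[10,15,0,12,33]) (S 29 (L[0,31,10,12,29]) (S 17 (S 9 (S 22 (L[9,20,10,12,22]) (S 21 (S 32 (S 24 (L[21,32,6,9,24]) (L[24,29,3,5,22])) (L[29,34,19,22,32])) (L[29,34,19,21,22]))) (S 35 (S 22 (L[10,35,12,20,22]) (S 32 (S 30 (L[6,17,4,30,32]) (L[19,30,7,9,22])) (L[9,29,19,22,32]))) (L[9,14,7,33,35]))) (L[29,34,17,19,27])))) (S 9 (S 35 (S 22 (L[9,20,1,22,35]) (S 24 (S 32 (L[24,35,6,9,32]) (S 11 (L[1,26,9,11,24]) (L[12,32,11,13,14]))) (L[3,7,5,22,24]))) (L[2,27,12,14,35])) (L[2,27,9,12,19]))))))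 (S 11 (S 25 (S 29 (S 14 (L[1,26,11,14,29]) (S 28 (L[0,11,26,28,29]) (S 30 (L[4,29,1,11,30]) (S 9 (S 24 (L[1,26,9,11,24]) (S 7 (S 23 (L[7,23,4,6,25]) (S 22 (L[6,22,4,7,25]) (L[3,23,5,22,24]))) (S 22 (S 12 (L[4,15,12,22,25]) (S 35 (L[11,22,1,9,35]) (L[24,35,12,14,27]))) (L[3,7,5,22,24])))) (L[10,30,2,9,28]))))) (L[3,8,10,27,29])) (L[18,27,8,10,25])) (L[13,18,3,10,11]))))) (L[3,8,5,6,18])))) (S 10 (S 12 (S 13 (L[0,20,10,12,13]) (L[2,13,3,5,31])) (L[3,12,2,5,31])) (L[5,10,2,3,31]))) (S 23 (S 28 (S 13 (L[23,28,0,13,15]) (L[2,13,3,5,26])) (L[3,28,2,5,26])) (L[3,23,2,5,26])))) (S 31 (S 10 (S 21 (S 23 (S 28 (S 22 (S 33 (L[22,33,4,21,23]) (S 30 (L[21,30,4,22,23]) (S 7 (L[0,31,7,10,28]) (L[5,30,7,20,33])))) (L[2,22,3,5,20])) (L[3,28,2,5,20])) (L[3,23,2,5,20])) (L[5,21,2,3,20])) (L[5,10,2,3,20])) (L[20,31,2,3,5]))) (S 26 (S 23 (S 28 (S 13 (L[23,28,0,13,26]) (L[2,13,3,5,15])) (L[3,28,2,5,15])) (L[3,23,2,5,15])) (L[15,26,2,3,5]))"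
lemma P3: "chk [4, 1, 0] [5, 3, 2] C3"
  unfolding C3_def by (simp add: adjb_def inD_def)

definition C4 :: cert where "C4 = S 5 (S 21 (S 34 (S 8 (L[1,21,0,8,34]) (S 13 (L[1,21,0,13,34]) (S 19 (L[1,21,0,19,34]) (S 24 (L[1,21,0,24,34]) (S 17 (S 35 (L[1,17,0,34,35]) (S 15 (L[0,5,15,17,34]) (S 10 (S 7 (L[7,34,0,10,17]) (S 18 (L[18,34,0,10,17]) (S 29 (L[29,34,0,10,17]) (S 33 (L[17,33,0,10,34]) (S 25 (S 30 (S 27 (L[25,34,10,17,27]) (S 12 (S 20 (S 6 (S 22 (L[20,25,10,12,22]) (S 32 (S 9 (L[6,17,9,30,32]) (L[19,24,7,9,22])) (L[4,29,19,22,32]))) (L[4,24,3,6,27])) (L[7,18,20,33,35])) (L[4,29,12,19,27]))) (L[4,15,7,30,33])) (L[8,33,7,15,25])))))) (S 20 (S 31 (S 33 (L[0,31,21,33,34]) (S 7 (S 28 (L[17,28,5,7,20]) (S 18 (L[7,18,5,17,20]) (S 30 (L[5,30,7,17,20]) (L[28,33,15,18,30])))) (S 9 (S 14 (S 30 (S 27 (L[1,17,9,27,30]) (S 29 (S 16 (L[1,17,14,16,29]) (S 18 (L[5,30,17,18,20]) (L[3,8,15,16,18]))) (L[3,8,10,27,29]))) (L[4,15,7,30,33])) (L[4,15,7,14,33])) (L[8,33,7,9,10])))) (L[2,13,3,10,31])) (L[2,13,3,10,20]))))) (S 30 (S 12 (S 9 (S 27 (L[1,12,9,27,30]) (L[2,27,4,17,19]))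 (L[4,9,2,17,19])) (L[12,17,2,4,19])) (L[19,30,2,4,17]))))))) (S 8 (S 18 (L[1,21,0,8,18]) (S 29 (L[1,21,0,8,29]) (S 10 (S 23 (L[10,21,0,8,23]) (S 25 (S 7 (L[0,25,7,8,10]) (S 27 (L[1,10,8,25,27]) (S 6 (S 12 (S 13 (L[0,25,10,12,13]) (S 33 (L[0,25,10,12,33]) (S 30 (S 15 (S 32 (L[6,15,8,25,32]) (S 22 (L[5,25,12,15,22]) (S 31 (S 14 (S 24 (L[12,21,14,24,31]) (L[3,34,22,24,32])) (L[4,29,14,22,32])) (L[3,34,13,31,32])))) (S 16 (S 9 (L[16,21,6,8,9]) (S 14 (S 32 (S 24 (L[1,6,14,16,24]) (S 35 (L[1,6,14,16,35]) (S 17 (S 20 (S 22 (L[17,22,20,30,32]) (L[24,35,7,9,22])) (L[2,33,20,23,35])) (L[9,34,17,24,27])))) (L[3,34,13,15,32])) (L[4,15,7,14,33]))) (L[13,18,3,15,16]))) (L[2,33,4,23,30])))) (S 14 (S 19 (S 9 (L[8,19,6,9,21]) (S 35 (S 22 (L[14,25,1,22,35]) (S 32 (L[8,35,6,25,32]) (L[4,29,3,22,32]))) (L[2,27,9,12,35]))) (L[2,27,4,12,19])) (L[2,27,4,12,14]))) (L[4,29,3,6,27])))) (S 12 (S 15 (S 22 (S 33 (L[22,33,5,12,15]) (L[2,33,4,23,25])) (L[2,22,4,23,25])) (L[4,15,2,23,25])) (L[12,23,2,4,25])))) (S 11 (S 20 (S 31 (S 7 (L[20,31,5,7,8]) (S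 23 (L[20,31,5,8,23]) (S 9 (L[1,21,8,9,11]) (S 28 (S 13 (L[5,21,13,20,28]) (S 25 (S 27 (L[20,25,1,8,27]) (S 22 (S 12 (S 15 (L[5,25,12,15,22]) (S 30 (L[5,30,12,20,22]) (L[2,13,15,23,30]))) (L[2,27,9,10,12])) (L[22,27,3,10,29]))) (L[4,10,2,23,25]))) (L[2,7,9,10,28]))))) (L[2,18,3,10,31])) (L[2,18,3,10,20])) (L[18,29,3,10,11]))))) (S 19 (S 18 (L[1,21,0,18,19]) (S 29 (L[1,21,0,19,29]) (S 9 (S 11 (L[1,21,9,11,19]) (S 26 (S 32 (S 6 (L[21,32,6,9,19]) (S 16 (L[1,26,9,16,19]) (L[3,8,6,16,18]))) (L[3,8,11,29,32])) (L[3,8,11,18,26]))) (S 10 (S 30 (S 20 (S 22 (L[19,30,1,20,22]) (S 27 (L[19,30,1,20,27]) (S 6 (S 32 (S 26 (S 17 (L[19,30,17,20,32]) (S 24 (S 7 (L[19,24,0,7,26]) (S 14 (L[21,32,6,14,24]) (L[17,22,4,7,14]))) (L[9,34,17,24,27]))) (L[9,29,8,26,27])) (L[4,29,3,22,32])) (L[4,29,3,6,27])))) (S 7 (S 17 (L[10,19,0,7,17]) (S 35 (S 28 (L[10,35,0,7,28]) (S 25 (S 22 (L[10,35,7,22,25]) (S 32 (S 6 (L[7,32,6,25,35]) (S 27 (S 12 (L[10,35,12,25,27]) (S 14 (L[14,25,1,27,35]) (L[12,17,2,4,14]))) (L[3,8,6,27,29]))) (L[4,20,3,22,32]))) (L[17,28,2,4,25])))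 (L[9,20,2,17,35]))) (S 6 (S 13 (S 23 (L[10,21,0,13,23]) (S 28 (L[10,21,0,13,28]) (S 25 (S 35 (S 32 (L[25,30,6,13,32]) (S 11 (S 12 (L[0,11,10,12,13]) (S 14 (L[1,21,11,13,14]) (S 27 (S 17 (L[10,35,17,25,27]) (L[4,29,14,17,32])) (L[4,29,12,14,27])))) (L[9,29,8,11,32]))) (L[23,28,2,20,35])) (L[23,28,2,4,25])))) (S 17 (S 15 (S 22 (S 12 (L[5,30,12,15,22]) (S 23 (L[5,30,15,22,23]) (S 32 (L[17,22,15,30,32]) (S 25 (S 35 (S 11 (S 27 (L[25,30,15,17,27]) (S 14 (L[11,22,1,14,35]) (L[2,27,4,12,14]))) (L[4,13,3,11,32])) (L[9,20,2,12,35])) (L[12,23,2,4,25]))))) (S 32 (S 35 (S 14 (L[15,35,14,17,32]) (S 33 (L[17,33,15,30,32]) (L[22,33,4,7,14]))) (L[9,20,7,22,35])) (L[13,22,3,20,32]))) (S 32 (S 25 (S 24 (L[6,17,24,25,32]) (S 35 (L[6,17,25,32,35]) (S 12 (S 22 (S 33 (L[22,33,10,12,25]) (L[9,20,7,33,35])) (L[24,35,7,9,22])) (L[9,20,2,12,35])))) (L[7,18,8,15,25])) (L[15,20,3,13,32]))) (S 35 (S 14 (S 25 (S 27 (L[14,25,6,27,35]) (S 32 (L[14,25,6,32,35]) (S 11 (S 24 (L[1,21,11,14,24]) (L[7,27,9,17,24])) (L[9,29,8,11,32])))) (L[2,7,4,17,25])) (L[2,7,4,14,17])) (L[9,20,2,17,35]))))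 (S 27 (S 25 (S 24 (S 26 (L[1,26,24,25,27]) (L[6,26,7,8,9])) (L[8,24,6,7,9])) (L[9,25,6,7,8])) (L[4,29,3,6,27]))))) (S 12 (S 17 (S 28 (S 7 (L[17,28,0,7,10]) (S 13 (L[12,28,0,10,13]) (S 22 (S 33 (S 25 (L[22,33,10,12,25]) (S 15 (L[0,5,12,15,33]) (S 23 (L[12,23,0,10,33]) (L[25,30,13,15,23])))) (L[4,9,7,30,33])) (L[4,9,7,22,30])))) (L[4,9,2,28,30])) (L[4,9,2,17,30])) (L[4,9,2,12,30]))) (S 20 (S 27 (S 12 (L[1,12,19,20,27]) (S 17 (L[1,17,19,20,27]) (S 30 (L[19,30,1,20,27]) (L[12,17,2,4,30])))) (L[9,29,8,10,27])) (L[2,18,3,10,20])))))) (S 12 (S 17 (S 32 (S 15 (S 7 (L[0,5,7,15,17]) (S 33 (L[0,5,12,15,33]) (S 18 (L[0,5,15,17,18]) (S 9 (S 30 (L[9,15,17,30,32]) (S 20 (S 22 (L[15,20,5,12,22]) (L[19,30,4,7,22])) (L[7,18,20,30,33]))) (S 22 (S 30 (L[5,30,12,15,22]) (L[4,9,7,30,33])) (L[4,9,7,19,22])))))) (S 16 (S 24 (S 7 (L[0,5,7,17,24]) (S 9 (L[1,17,9,16,24]) (S 26 (S 14 (L[1,17,14,16,24]) (S 23 (L[0,5,23,24,26]) (S 25 (S 22 (S 20 (L[20,24,5,12,22]) (S 10 (S 33 (L[22,33,10,12,25]) (L[4,15,7,14,33])) (L[9,20,7,8,10]))) (L[14,19,4,7,22]))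 (L[4,15,2,23,25])))) (L[2,7,9,19,26])))) (S 27 (S 9 (S 10 (L[12,17,9,10,27]) (S 30 (L[27,32,9,17,30]) (S 23 (S 28 (S 26 (L[16,27,9,26,28]) (S 11 (S 13 (L[0,11,13,21,23]) (S 20 (S 31 (S 7 (L[17,28,5,7,20]) (S 33 (L[20,31,5,12,33]) (S 22 (L[12,23,5,20,22]) (L[22,33,7,15,30])))) (L[2,13,3,10,31])) (L[2,13,3,10,20]))) (L[3,34,11,24,26]))) (L[4,15,2,28,30])) (L[4,15,2,23,30])))) (S 25 (S 10 (L[12,17,10,25,27]) (S 35 (L[27,32,17,25,35]) (S 28 (S 11 (S 13 (L[0,11,13,21,28]) (S 20 (S 31 (S 7 (L[17,28,5,7,20]) (S 33 (L[20,31,5,12,33]) (L[8,33,7,9,10]))) (L[2,13,3,10,31])) (L[2,13,3,10,20]))) (L[9,34,8,10,11])) (L[10,35,2,9,28])))) (S 23 (S 28 (S 13 (L[23,28,0,13,21]) (S 7 (S 10 (L[17,28,0,7,10]) (S 20 (L[17,28,5,7,20]) (L[2,13,3,10,20]))) (S 26 (S 33 (S 18 (L[28,33,16,18,26]) (L[7,18,8,15,25])) (L[8,33,7,15,25])) (L[15,26,7,8,25])))) (L[4,15,2,25,28])) (L[4,15,2,23,25])))) (S 6 (S 25 (S 10 (S 33 (L[0,25,10,12,33]) (S 18 (L[0,25,10,17,18]) (S 35 (L[6,17,25,32,35]) (S 7 (L[0,25,7,10,17]) (S 30 (S 9 (L[6,17,9,30,32]) (S 20 (S 22 (L[20,25,10,12,22])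 (L[19,24,7,9,22])) (L[7,18,20,33,35]))) (L[4,15,7,30,33])))))) (L[10,15,8,27,34])) (L[25,34,8,15,27])) (L[4,24,3,6,27])))) (S 6 (S 23 (S 13 (L[0,6,13,21,23]) (L[3,34,13,15,16])) (L[23,34,8,15,16])) (L[3,19,4,6,16])))) (S 6 (S 11 (S 22 (S 31 (S 13 (S 20 (L[20,31,5,12,13]) (S 23 (L[6,31,5,13,23]) (S 10 (L[0,11,10,12,13]) (L[2,8,10,20,23])))) (S 15 (S 7 (L[17,22,5,7,15]) (S 33 (L[22,33,5,12,15]) (S 20 (L[15,20,5,12,22]) (S 30 (L[5,30,12,15,22]) (L[4,20,7,30,33]))))) (L[3,34,13,15,32]))) (L[8,19,31,32,34])) (L[3,19,4,22,32])) (L[3,19,4,11,32])) (L[3,19,4,6,32]))) (S 30 (S 9 (S 27 (L[1,12,9,27,30]) (L[2,27,4,17,19])) (L[4,9,2,17,19])) (L[19,30,2,4,17]))) (S 30 (S 17 (S 9 (S 27 (L[1,17,9,27,30]) (L[2,27,4,12,19])) (L[4,9,2,12,19])) (L[12,17,2,4,19])) (L[19,30,2,4,12])))))) (S 20 (S 31 (S 14 (S 23 (S 28 (S 6 (S 11 (S 22 (S 7 (L[22,28,5,7,20]) (S 8 (L[6,20,5,8,23]) (S 18 (L[20,31,5,18,28]) (S 12 (L[12,23,5,20,22]) (S 33 (L[22,33,5,20,23]) (S 15 (L[15,20,5,22,23]) (S 30 (S 9 (L[1,28,9,11,30]) (S 35 (S 16 (L[1,6,14,16,35]) (L[3,8,15,16,18]))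 (L[2,33,9,12,35]))) (L[4,15,7,30,33])))))))) (L[2,22,3,4,21])) (L[2,11,3,4,21])) (L[2,6,3,4,21])) (L[3,28,2,4,21])) (L[3,23,2,4,21])) (L[3,14,2,4,21])) (L[4,31,2,3,21])) (L[4,20,2,3,21]))) (S 21 (S 15 (S 20 (S 12 (S 17 (S 23 (S 28 (S 22 (S 25 (L[12,23,15,22,25]) (S 18 (L[0,20,18,21,28]) (S 33 (L[22,33,20,21,23]) (S 35 (L[21,35,20,22,23]) (S 7 (L[17,28,0,7,15]) (L[7,18,25,33,35])))))) (L[2,22,3,4,5])) (L[3,28,2,4,5])) (L[3,23,2,4,5])) (L[3,17,2,4,5])) (L[3,12,2,4,5])) (L[4,20,2,3,5])) (L[4,15,2,3,5])) (L[5,21,2,3,4]))"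
lemma P4: "chk [1, 0] [4, 3, 2] C4"
  unfolding C4_def by (simp add: adjb_def inD_def)

definition C5 :: cert where "C5 = S 10 (S 21 (L[10,21,0,2,3]) (S 23 (L[3,23,0,2,10]) (S 28 (L[3,28,0,2,10]) (S 13 (L[2,13,0,3,10]) (S 20 (L[0,20,2,3,10]) (L[23,28,13,20,21])))))) (S 15 (S 26 (L[15,26,0,2,3]) (S 23 (L[3,23,0,2,15]) (S 28 (L[3,28,0,2,15]) (S 13 (L[2,13,0,3,15]) (S 5 (L[0,5,2,3,15]) (L[23,28,5,13,26])))))) (S 21 (S 23 (L[3,23,0,2,21]) (S 28 (L[3,28,0,2,21]) (S 13 (L[2,13,0,3,21]) (S 20 (L[0,20,2,3,21]) (L[23,28,10,13,20]))))) (S 26 (S 23 (L[3,23,0,2,26]) (S 28 (L[3,28,0,2,26]) (S 13 (L[2,13,0,3,26]) (S 5 (L[0,5,2,3,26]) (L[23,28,5,13,15]))))) (S 4 (S 5 (S 20 (L[4,20,2,3,5]) (S 12 (L[3,12,2,4,5]) (S 23 (L[3,23,2,4,5]) (S 22 (L[2,22,3,4,5]) (L[12,23,10,20,22]))))) (S 13 (S 8 (S 33 (S 25 (S 12 (L[2,33,4,12,25]) (S 23 (L[2,33,4,23,25]) (S 22 (S 7 (L[22,33,4,7,25]) (S 28 (S 17 (L[17,28,2,4,25]) (S 30 (L[25,30,2,4,28]) (L[5,30,7,15,17]))) (L[15,26,5,7,28]))) (L[12,23,5,15,22])))) (S 17 (S 19 (L[0,4,2,17,19]) (S 16 (S 6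 (L[4,13,3,6,16]) (S 14 (L[17,33,4,14,16]) (S 29 (S 31 (L[3,8,16,29,31]) (S 18 (S 35 (L[0,16,18,33,35]) (S 22 (S 32 (L[4,29,3,22,32]) (L[14,25,6,32,35])) (L[14,25,1,22,35]))) (L[6,31,18,19,21]))) (L[14,19,6,21,29])))) (S 9 (S 18 (S 29 (S 35 (L[2,18,0,17,35]) (S 30 (L[4,9,2,17,30]) (S 6 (S 27 (L[4,29,3,6,27]) (S 12 (S 14 (L[12,17,2,4,14]) (L[16,27,1,14,35])) (L[25,30,12,15,27]))) (S 14 (S 27 (L[4,29,14,17,27]) (L[1,6,25,27,35])) (L[1,6,14,16,35]))))) (L[1,26,16,19,29])) (L[1,26,16,18,19])) (L[1,26,9,16,19])))) (S 7 (S 18 (S 27 (S 35 (L[7,18,0,33,35]) (S 32 (S 6 (L[27,32,3,4,6]) (S 11 (L[4,13,3,11,32]) (S 14 (L[7,32,4,14,33]) (S 24 (S 29 (S 12 (S 19 (L[4,29,12,19,27]) (S 34 (S 22 (L[3,34,22,24,32]) (L[11,22,1,14,35])) (L[6,11,19,21,34]))) (L[1,12,11,14,35])) (L[1,21,11,14,29])) (L[1,21,11,14,24]))))) (L[15,35,17,25,32]))) (L[10,15,17,25,27])) (L[5,25,15,17,18])) (L[5,25,7,15,17])))) (S 7 (S 23 (S 12 (S 35 (L[12,23,0,2,35]) (S 25 (L[12,23,2,4,25]) (S 30 (L[12,23,2,4,30]) (S 19 (L[0,4,2,12,19]) (S 32 (S 6 (L[4,13,3,6,32]) (S 11 (L[4,13,3,11,32])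 (S 29 (S 27 (S 22 (L[4,29,3,22,32]) (S 14 (L[2,27,4,12,14]) (L[11,22,1,14,35]))) (L[1,6,25,27,35])) (L[1,21,11,19,29])))) (L[25,30,15,32,33])))))) (S 22 (S 20 (S 30 (L[4,20,7,22,30]) (L[5,30,12,15,33])) (L[15,20,5,12,33])) (L[22,33,5,12,15]))) (L[15,26,5,23,33])) (L[15,26,5,7,33]))) (S 7 (S 23 (S 34 (S 6 (S 16 (L[4,13,3,6,16]) (S 32 (L[4,13,3,6,32]) (S 25 (L[7,23,4,6,25]) (S 27 (S 29 (L[4,29,3,6,27]) (L[1,26,8,16,29])) (L[27,32,8,15,25]))))) (S 29 (S 25 (S 12 (L[12,23,2,4,25]) (S 22 (L[7,23,4,22,25]) (S 33 (L[2,33,4,23,25]) (L[22,33,5,12,15])))) (S 27 (S 32 (S 11 (L[3,34,11,13,32]) (S 22 (L[4,29,3,22,32]) (S 12 (S 35 (L[12,23,0,2,35]) (S 14 (L[2,27,4,12,14]) (L[11,22,1,14,35]))) (L[5,25,12,15,22])))) (L[6,15,8,25,32])) (L[1,6,8,25,27]))) (L[6,26,5,8,29]))) (L[15,26,5,8,34])) (L[15,26,5,8,23])) (L[15,26,5,7,8]))) (S 23 (S 28 (S 34 (S 35 (L[23,28,0,2,35]) (S 25 (L[23,28,2,4,25]) (S 30 (L[23,28,2,4,30]) (S 12 (S 32 (S 6 (S 11 (L[6,11,3,4,32]) (S 14 (L[3,14,4,6,32]) (L[1,21,11,13,14]))) (S 27 (S 14 (L[2,27,4,12,14]) (S 24 (S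 11 (L[3,34,11,24,32]) (L[1,21,11,13,14])) (L[13,24,6,14,21]))) (L[1,6,25,27,35]))) (L[25,30,13,15,32])) (L[5,25,12,13,15]))))) (L[15,26,5,13,34])) (L[15,26,5,13,28])) (L[15,26,5,13,23])))) (S 11 (S 22 (S 32 (S 24 (L[11,22,3,24,32]) (S 29 (L[11,22,3,29,32]) (S 19 (S 9 (L[11,22,9,19,32]) (S 34 (L[11,22,19,32,34]) (S 20 (L[3,19,20,22,32]) (S 16 (S 6 (S 13 (L[16,32,3,6,13]) (S 18 (L[3,19,6,16,18]) (S 8 (S 23 (S 31 (S 33 (L[8,33,16,23,31]) (L[10,21,18,20,33])) (L[10,21,13,31,34])) (L[10,21,13,20,23])) (L[1,10,8,18,20])))) (L[9,34,6,21,24])) (L[9,34,1,16,24]))))) (S 16 (S 6 (S 13 (L[16,32,3,6,13]) (S 5 (S 20 (L[2,22,3,5,20]) (S 18 (L[5,16,3,6,18]) (L[1,21,18,19,20]))) (S 23 (S 28 (S 34 (S 8 (L[23,34,6,8,16]) (S 31 (S 18 (L[3,28,16,18,31]) (L[15,26,5,8,18])) (L[5,10,8,29,31]))) (L[15,26,5,13,34])) (L[15,26,5,13,28])) (L[15,26,5,13,23])))) (L[4,29,6,19,21])) (L[4,29,1,16,19]))))) (S 14 (S 35 (S 17 (L[0,14,2,17,35]) (S 25 (S 28 (L[0,25,2,28,35]) (S 7 (L[14,25,7,22,35]) (S 5 (S 20 (L[2,22,3,5,20]) (L[17,28,7,10,20])) (L[17,28,4,5,7])))) (L[4,15,17,25,32])))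 (S 25 (S 12 (S 24 (L[11,22,12,14,24]) (S 29 (L[11,22,12,14,29]) (S 9 (S 19 (L[0,9,2,12,19]) (S 6 (S 16 (S 27 (S 31 (S 5 (L[3,12,2,5,31]) (S 18 (L[6,31,3,16,18]) (S 8 (L[16,27,6,8,9]) (L[15,26,5,8,18])))) (L[21,32,19,29,31])) (L[1,26,19,27,29])) (L[1,26,16,19,29])) (L[21,32,4,6,19]))) (S 16 (S 6 (S 13 (L[3,14,6,13,16]) (S 17 (S 19 (L[12,17,0,2,19]) (S 31 (S 5 (L[3,12,2,5,31]) (S 18 (L[6,31,3,16,18]) (S 8 (S 23 (S 34 (L[23,34,6,8,16]) (L[15,26,5,13,34])) (L[15,26,5,13,23])) (L[15,26,5,8,18])))) (L[21,32,19,29,31]))) (L[24,35,9,17,32]))) (L[21,32,6,9,24])) (L[24,35,1,9,16]))))) (S 19 (S 9 (S 17 (L[0,9,2,17,19]) (S 30 (S 7 (L[19,30,7,9,22]) (S 20 (S 28 (L[2,11,9,28,30]) (S 5 (L[2,22,3,5,20]) (L[17,28,4,5,7]))) (L[10,35,7,17,20]))) (L[4,15,17,30,32]))) (S 27 (S 6 (S 24 (L[3,14,6,24,27]) (S 16 (S 17 (S 18 (L[6,17,16,18,19]) (S 34 (L[6,17,16,19,34]) (S 20 (L[2,27,17,19,20]) (S 28 (S 31 (S 5 (L[3,28,2,5,31]) (S 13 (L[6,31,3,13,16]) (L[15,20,5,12,13]))) (L[21,32,24,31,34])) (L[10,21,18,20,28]))))) (L[24,35,9,17,32])) (L[1,26,9,16,24])))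 (S 24 (S 7 (L[14,25,7,22,24]) (L[7,32,6,9,35])) (L[21,32,6,9,24]))) (L[10,35,9,12,27]))) (S 6 (S 27 (S 29 (L[3,14,6,27,29]) (S 31 (S 16 (S 17 (S 13 (L[6,31,3,13,16]) (S 18 (L[6,31,3,16,18]) (S 30 (S 20 (L[2,27,17,20,30]) (L[1,21,18,19,20])) (L[12,32,13,15,30])))) (L[4,29,17,19,32])) (L[1,26,16,19,29])) (L[10,19,12,29,31]))) (L[1,12,4,19,27])) (L[21,32,4,6,19])))) (S 27 (S 6 (S 29 (L[3,14,6,27,29]) (S 17 (S 33 (S 24 (L[3,14,6,24,27]) (S 5 (S 20 (L[3,17,2,5,20]) (S 18 (S 16 (L[5,16,3,6,18]) (S 8 (L[3,8,5,6,18]) (L[1,26,8,16,29]))) (L[20,25,1,18,35]))) (S 7 (S 19 (L[2,7,0,17,19]) (S 16 (S 13 (L[3,14,6,13,16]) (S 12 (S 31 (L[2,33,12,14,31]) (L[21,32,19,29,31])) (L[5,25,12,13,15]))) (L[4,29,1,16,19]))) (L[5,25,7,24,26])))) (L[4,15,25,32,33])) (L[4,15,17,25,32]))) (L[4,35,6,25,32])) (L[4,35,1,25,27])))) (S 6 (S 33 (S 17 (S 19 (S 7 (L[2,7,0,17,19]) (S 29 (L[2,29,0,17,19]) (S 16 (S 27 (S 9 (L[0,9,2,17,19]) (S 24 (L[16,27,3,6,24]) (L[9,14,7,24,26]))) (L[4,29,1,14,27])) (L[4,29,1,14,16])))) (S 16 (S 27 (S 24 (L[16,27,3,6,24]) (S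 29 (L[16,27,3,6,29]) (S 31 (S 18 (L[3,33,16,18,31]) (S 20 (S 5 (L[20,31,2,3,5]) (S 13 (L[6,31,3,13,16]) (S 8 (S 23 (S 34 (L[23,34,6,8,16]) (L[15,26,5,13,34])) (L[15,26,5,13,23])) (L[15,26,5,8,18])))) (L[1,21,18,19,20]))) (L[24,29,14,21,31])))) (L[14,19,1,4,27])) (L[14,19,1,4,16]))) (L[4,15,14,17,32])) (L[21,32,4,14,33])) (L[21,32,4,6,14])))) (S 14 (S 19 (S 9 (S 12 (L[0,9,2,12,19]) (S 17 (L[0,9,2,17,19]) (S 25 (S 30 (S 5 (S 32 (L[19,30,9,11,32]) (S 28 (L[2,11,9,28,30]) (S 34 (S 6 (S 13 (L[3,34,5,6,13]) (S 16 (L[9,34,6,16,19]) (L[15,26,13,16,28]))) (S 23 (S 20 (L[3,23,2,5,20]) (S 35 (L[0,25,2,23,35]) (L[10,35,12,20,22]))) (L[6,22,4,21,23]))) (L[17,22,15,32,34])))) (L[4,15,5,12,22])) (L[1,12,4,22,30])) (L[1,12,4,22,25])))) (S 24 (S 32 (L[3,14,11,24,32]) (S 25 (S 35 (S 12 (L[24,35,11,12,14]) (S 17 (L[19,35,0,2,17]) (S 23 (L[0,25,2,23,35]) (S 5 (S 6 (S 7 (L[3,7,5,6,24]) (L[17,22,7,9,10])) (L[6,22,4,21,23])) (L[12,23,4,5,22]))))) (L[1,32,9,22,35])) (L[4,15,22,25,32]))) (L[1,21,9,22,24]))) (L[1,21,4,19,22])) (L[1,21,4,14,22]))) (S 14 (S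 19 (S 12 (S 35 (L[19,35,0,2,12]) (S 17 (L[12,17,0,2,19]) (S 29 (L[2,29,0,12,19]) (S 30 (S 9 (L[19,30,2,9,12]) (S 24 (S 27 (S 22 (L[22,27,12,14,24]) (L[11,22,1,9,35])) (L[10,35,9,17,27])) (L[1,21,9,11,24]))) (L[4,29,1,11,30]))))) (S 30 (S 9 (S 17 (L[19,30,2,9,17]) (S 20 (S 28 (L[9,20,2,28,30]) (S 23 (S 13 (L[2,13,20,23,30]) (L[12,28,10,11,13])) (L[23,28,4,11,21]))) (S 27 (S 28 (L[2,27,9,28,30]) (S 18 (S 7 (S 22 (L[19,30,7,9,22]) (S 33 (S 25 (S 35 (L[0,25,18,33,35]) (L[10,35,12,20,22])) (L[20,25,10,12,22])) (L[22,33,10,12,20]))) (L[17,28,7,10,20])) (L[17,28,10,18,20]))) (L[12,17,10,20,27])))) (S 28 (S 22 (S 27 (S 24 (S 35 (S 29 (S 17 (L[24,29,14,17,27]) (S 32 (L[24,29,14,22,32]) (S 25 (L[2,27,25,28,35]) (L[4,15,17,25,32])))) (L[9,29,10,11,12])) (L[10,35,9,11,12])) (L[10,24,9,11,12])) (L[11,27,9,10,12])) (L[11,22,9,10,12])) (L[12,28,9,10,11]))) (L[1,12,4,11,30]))) (L[1,21,4,11,19])) (L[1,21,4,11,14])))))))"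
lemma P5: "chk [3, 2, 0] [1] C5"
  unfolding C5_def by (simp add: adjb_def inD_def)

definition C6 :: cert where "C6 = S 12 (L[0,4,2,12,19]) (S 17 (L[0,4,2,17,19]) (S 21 (L[0,4,2,19,21]) (S 24 (S 26 (S 18 (L[2,18,0,19,26]) (S 29 (L[2,29,0,19,26]) (S 16 (S 6 (S 14 (L[14,19,4,6,16]) (S 27 (L[16,27,4,6,19]) (S 32 (L[16,32,4,6,19]) (L[27,32,14,17,29])))) (L[18,29,3,6,21])) (L[18,29,1,3,16])))) (S 29 (S 13 (S 18 (S 10 (S 8 (L[18,29,0,8,10]) (S 23 (L[2,13,0,10,23]) (S 11 (S 34 (L[0,11,10,13,34]) (S 6 (S 16 (L[4,18,6,16,19]) (L[23,34,8,16,26])) (L[23,34,6,8,21]))) (L[21,26,8,11,23])))) (S 6 (S 16 (L[4,18,6,16,19]) (S 27 (L[4,29,6,19,27]) (S 20 (S 25 (S 7 (L[19,25,4,6,7]) (S 23 (L[2,6,4,23,25]) (S 5 (S 8 (L[18,29,5,6,8]) (S 34 (L[13,24,5,6,34]) (L[23,34,8,16,26]))) (S 8 (S 33 (S 15 (L[0,25,8,15,18]) (S 30 (S 28 (L[28,33,18,20,30]) (L[17,28,5,7,15])) (L[7,27,15,17,30]))) (L[7,23,5,26,33])) (L[7,23,5,8,26]))))) (L[12,17,10,25,27])) (L[3,12,10,20,27])))) (S 32 (S 11 (L[4,29,11,19,32]) (S 22 (L[4,29,19,22,32]) (S 20 (S 9 (S 5 (S 23 (L[4,20,2,5,23]) (S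 8 (S 15 (L[0,5,8,15,18]) (S 31 (L[5,32,8,29,31]) (S 33 (S 30 (L[5,30,18,20,33]) (L[12,23,15,22,30])) (L[12,23,10,31,33])))) (L[10,21,8,11,23]))) (S 15 (S 34 (L[0,32,13,15,34]) (S 23 (L[2,13,0,15,23]) (S 35 (S 8 (S 33 (S 7 (L[0,9,7,33,35]) (S 25 (L[0,25,8,15,18]) (L[7,12,10,22,25]))) (L[23,34,5,26,33])) (L[23,34,5,6,8])) (L[11,22,1,34,35])))) (L[3,12,5,15,22]))) (L[11,22,9,10,12])) (L[1,10,3,20,22])))) (S 9 (S 20 (S 35 (S 23 (L[0,20,2,23,35]) (S 33 (L[0,20,18,33,35]) (S 31 (S 16 (L[18,29,16,19,31]) (S 8 (S 15 (S 34 (L[18,34,0,8,15]) (L[23,34,16,26,33])) (L[15,26,16,23,33])) (L[8,33,16,23,26]))) (L[10,21,23,31,33])))) (S 14 (S 25 (S 34 (S 5 (S 23 (L[5,25,2,4,23]) (S 31 (L[13,24,5,31,34]) (S 8 (S 33 (L[8,33,5,18,20]) (L[12,23,10,31,33])) (L[6,31,8,21,23])))) (S 7 (S 22 (L[14,19,4,7,22]) (S 33 (L[14,25,4,7,33]) (S 15 (S 8 (L[0,25,7,8,15]) (S 31 (S 16 (L[15,31,13,14,16]) (S 23 (L[0,25,13,15,23]) (L[8,33,16,23,26]))) (L[5,10,12,31,33]))) (L[22,33,5,12,15])))) (S 8 (S 15 (L[0,25,8,15,18]) (S 30 (S 28 (L[2,13,20,28,30]) (L[17,28,5,7,15])) (L[7,32,15,17,30])))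 (L[6,26,5,7,8])))) (L[6,17,32,34,35])) (L[6,17,25,32,35])) (L[6,17,14,32,35]))) (S 22 (S 27 (S 7 (L[19,24,7,9,22]) (S 28 (S 30 (S 35 (L[30,35,9,27,28]) (L[10,35,7,17,20])) (L[10,30,7,17,20])) (L[17,28,7,10,20]))) (L[1,10,3,20,27])) (L[1,10,3,20,22]))) (S 27 (S 30 (S 35 (S 28 (L[4,29,27,28,30]) (S 7 (S 33 (L[7,18,0,33,35]) (S 22 (L[19,30,4,7,22]) (L[22,33,9,10,12]))) (L[17,28,7,9,10]))) (L[6,17,9,32,35])) (L[6,17,9,30,32])) (L[12,17,9,10,27])))))) (S 16 (S 20 (S 6 (L[4,29,6,16,19]) (S 8 (S 31 (L[8,19,16,29,31]) (S 28 (S 15 (L[2,13,0,15,28]) (S 5 (L[4,20,2,5,28]) (L[6,15,3,5,18]))) (L[3,28,18,21,31]))) (L[3,8,6,18,21]))) (L[1,21,3,18,20])) (L[1,26,3,16,18]))) (S 11 (S 16 (S 6 (L[4,29,6,16,19]) (S 32 (L[4,29,11,19,32]) (L[21,32,3,6,13]))) (L[1,26,3,13,16])) (L[1,21,3,11,13]))) (S 11 (S 16 (S 22 (S 27 (S 6 (L[16,27,4,6,19]) (S 32 (L[11,22,4,19,32]) (L[21,32,3,6,29]))) (L[1,26,3,27,29])) (L[1,21,3,22,29])) (L[1,26,3,16,29])) (L[1,21,3,11,29])))) (S 11 (S 22 (S 32 (L[11,22,4,19,32]) (S 6 (S 7 (L[6,22,4,7,19]) (S 9 (S 26 (L[2,11,9,19,26])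 (S 14 (S 16 (S 27 (L[16,27,4,6,14]) (L[1,26,3,24,27])) (L[1,26,3,16,24])) (L[7,32,14,17,24]))) (L[7,32,9,17,24]))) (L[21,32,3,6,24]))) (L[1,21,3,22,24])) (L[1,21,3,11,24])))))"
lemma P6: "chk [19, 4, 2, 0] [3, 1] C6"
  unfolding C6_def by (simp add: adjb_def inD_def)

definition C7 :: cert where "C7 = S 10 (S 12 (L[2,29,0,10,12]) (S 17 (L[2,29,0,10,17]) (S 28 (L[2,29,0,10,28]) (S 8 (S 18 (L[18,29,0,8,10]) (S 21 (L[10,21,0,8,29]) (S 26 (L[10,26,0,8,29]) (S 16 (S 5 (S 6 (L[5,16,6,8,29]) (L[3,19,6,18,21])) (L[3,28,5,18,26])) (L[3,19,1,16,18]))))) (S 23 (S 21 (L[10,21,0,2,23]) (S 13 (L[2,13,0,10,23]) (S 20 (L[0,20,2,10,23]) (L[1,21,3,13,20])))) (S 16 (S 11 (S 14 (S 21 (L[2,11,4,14,21]) (S 6 (L[4,29,6,14,16]) (S 13 (S 34 (L[0,11,10,13,34]) (L[8,19,6,21,34])) (L[8,13,6,21,23])))) (S 22 (S 27 (S 30 (S 32 (L[11,22,4,30,32]) (S 6 (L[4,29,6,27,30]) (S 34 (S 9 (S 13 (L[0,11,10,13,34]) (S 31 (S 24 (S 26 (L[9,34,16,24,26]) (S 5 (L[5,16,24,31,34]) (L[6,26,3,5,13]))) (L[6,17,14,24,32])) (L[12,32,13,14,31]))) (L[6,17,9,19,32])) (L[8,19,6,32,34])))) (S 15 (S 7 (S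 33 (L[10,15,0,7,33]) (S 5 (L[4,15,5,7,22]) (S 20 (S 9 (L[9,20,7,10,22]) (S 35 (L[10,35,7,20,22]) (L[30,35,9,12,33]))) (L[8,33,5,20,23])))) (S 9 (S 6 (S 24 (L[16,27,6,9,24]) (S 35 (L[16,27,6,9,35]) (L[24,35,7,14,17]))) (S 5 (S 24 (S 35 (S 32 (L[24,35,9,11,32]) (S 34 (S 31 (L[5,16,24,31,34]) (S 33 (L[0,16,33,34,35]) (L[7,12,30,31,33]))) (L[6,17,19,32,34]))) (L[6,17,7,14,35])) (L[6,17,7,14,24])) (L[7,23,5,6,8]))) (L[19,30,7,9,17]))) (S 7 (S 25 (L[4,10,7,22,25]) (S 5 (S 18 (S 26 (S 33 (L[0,5,18,26,33]) (L[14,25,12,15,33])) (L[15,26,8,23,25])) (L[18,23,8,15,25])) (L[5,25,8,15,23]))) (L[14,30,7,15,17])))) (S 9 (S 24 (S 34 (S 6 (L[9,34,6,16,24]) (S 21 (L[11,22,9,21,24]) (S 26 (L[11,16,9,24,26]) (S 13 (L[0,11,10,13,34]) (S 31 (S 5 (L[5,16,24,31,34]) (L[6,26,3,5,13])) (L[6,31,13,14,21])))))) (L[8,19,1,27,34])) (L[3,14,1,24,27])) (L[8,19,1,9,27]))) (S 24 (S 9 (S 35 (S 6 (L[24,35,6,9,16]) (S 32 (L[24,35,9,11,32]) (S 15 (S 34 (S 21 (L[0,11,21,24,34]) (S 13 (L[10,15,0,13,34]) (L[21,32,3,6,13]))) (L[1,32,19,22,34])) (L[12,32,14,15,22]))))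 (L[1,12,14,22,35])) (L[1,12,9,19,22])) (L[3,14,1,22,24])))) (S 9 (S 18 (S 34 (S 6 (S 14 (L[4,29,6,14,16]) (S 24 (L[9,34,6,16,24]) (S 35 (L[9,18,6,16,35]) (L[24,35,11,12,14])))) (S 21 (S 13 (L[10,21,0,13,34]) (S 24 (S 14 (S 26 (L[24,29,14,16,26]) (L[1,26,3,11,13])) (L[3,14,1,11,13])) (L[13,24,1,3,11]))) (L[6,11,8,21,23]))) (L[8,19,1,11,34])) (L[3,8,1,11,18])) (L[8,19,1,9,11]))) (S 18 (S 34 (S 33 (L[18,34,0,10,33]) (S 15 (S 26 (S 13 (L[10,15,0,13,34]) (S 11 (S 24 (S 14 (L[24,29,11,14,26]) (L[3,14,1,13,16])) (L[13,24,1,3,16])) (L[11,16,1,3,13]))) (L[8,33,16,23,26])) (L[8,33,15,16,23]))) (L[8,19,1,16,34])) (L[3,8,1,16,18])))))))) (S 20 (S 28 (S 21 (L[2,29,0,21,28]) (S 26 (L[2,29,0,26,28]) (S 5 (L[4,20,2,5,28]) (S 30 (L[4,20,2,28,30]) (S 35 (L[0,20,2,28,35]) (S 13 (S 15 (L[2,13,0,15,28]) (S 18 (S 22 (S 17 (S 25 (L[17,28,2,4,25]) (S 16 (S 14 (L[2,16,4,14,17]) (S 31 (L[13,18,16,28,31]) (S 24 (S 34 (L[0,16,17,24,34]) (S 6 (S 8 (L[18,29,6,8,16]) (L[8,19,21,31,34])) (L[6,31,19,21,34]))) (L[3,14,21,24,31])))) (S 9 (S 34 (S 24 (S 27 (L[9,34,17,24,27])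 (S 12 (S 14 (L[12,17,2,4,14]) (L[16,27,1,14,35])) (L[1,12,25,27,35]))) (L[1,26,3,16,24])) (L[19,35,1,16,34])) (L[19,35,1,9,16])))) (S 7 (S 25 (L[22,28,4,7,25]) (S 32 (S 14 (L[7,32,4,14,22]) (S 16 (S 31 (L[13,18,16,28,31]) (S 24 (S 9 (L[7,32,9,22,24]) (S 11 (S 34 (L[13,24,11,32,34]) (S 6 (S 8 (L[18,29,6,8,16]) (L[8,19,21,31,34])) (L[6,31,19,21,34]))) (L[19,30,1,9,11]))) (L[3,14,21,24,31]))) (L[15,35,14,16,17]))) (L[25,30,15,17,32]))) (L[5,30,7,15,17]))) (S 9 (S 24 (S 32 (S 7 (S 12 (S 17 (L[0,9,7,17,24]) (S 11 (L[12,32,9,11,24]) (S 14 (S 25 (L[14,25,2,4,12]) (S 27 (L[2,27,4,12,14]) (L[25,30,15,17,27]))) (L[11,22,1,14,35])))) (L[3,12,5,15,22])) (L[3,7,5,15,22])) (L[5,32,3,15,22])) (L[15,24,3,5,22])) (L[19,30,1,9,22]))) (L[15,26,3,5,18]))) (S 6 (S 24 (S 16 (S 23 (L[4,24,6,16,23]) (L[3,23,5,13,26])) (L[1,26,3,13,16])) (L[13,24,3,5,26])) (L[6,26,3,5,13])))))))) (S 23 (S 5 (L[4,20,2,5,23]) (S 21 (L[0,4,2,21,23]) (S 30 (L[4,20,2,23,30]) (S 35 (L[0,20,2,23,35]) (S 24 (S 26 (L[2,24,0,23,26]) (S 13 (S 15 (L[2,13,0,15,23]) (S 7 (S 12 (S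 25 (L[12,23,2,4,25]) (S 27 (S 14 (L[2,27,4,12,14]) (S 22 (S 9 (L[22,27,9,12,24]) (S 16 (S 11 (S 6 (L[4,13,6,16,23]) (S 34 (S 32 (L[13,24,11,32,34]) (L[9,14,6,32,35])) (L[9,34,6,19,21]))) (L[19,30,1,9,11])) (L[1,26,9,16,19]))) (L[14,25,1,22,35]))) (L[25,30,15,27,28]))) (S 22 (S 14 (L[4,24,7,14,22]) (S 25 (L[4,24,7,22,25]) (S 27 (S 11 (S 33 (S 6 (S 16 (L[6,33,4,16,23]) (S 9 (L[7,27,6,9,24]) (L[1,26,9,16,19]))) (S 32 (S 34 (L[13,24,11,32,34]) (S 16 (S 31 (L[13,24,16,23,31]) (L[6,31,19,21,34])) (L[1,6,14,16,35]))) (L[14,25,6,32,35]))) (L[15,35,12,14,33])) (L[1,12,11,14,35])) (L[12,28,10,25,27])))) (L[3,12,5,15,22]))) (L[15,26,5,7,28]))) (L[3,28,5,13,26]))) (S 6 (S 25 (L[2,6,4,23,25]) (S 7 (S 27 (S 14 (L[7,27,4,6,14]) (S 16 (S 33 (L[6,33,4,16,23]) (S 13 (L[4,13,6,16,23]) (S 12 (S 15 (L[12,23,0,2,15]) (L[5,25,13,15,28])) (L[13,33,10,12,25])))) (L[24,35,1,14,16]))) (L[10,35,25,27,28])) (L[10,35,7,25,28]))) (L[5,21,3,6,24]))))))) (S 12 (S 5 (L[4,20,2,5,12]) (S 30 (L[4,20,2,12,30]) (S 35 (L[0,20,2,12,35]) (S 13 (S 15 (L[2,13,0,12,15]) (S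 18 (S 22 (S 7 (S 33 (S 21 (L[0,20,18,21,33]) (S 26 (L[7,18,0,26,33]) (S 8 (S 24 (S 9 (L[7,12,9,22,24]) (S 11 (S 16 (S 6 (L[18,29,6,8,16]) (S 32 (S 34 (L[29,34,8,11,32]) (L[9,34,6,19,21])) (L[21,32,6,9,19]))) (L[19,35,1,9,16])) (L[19,30,1,9,11]))) (L[3,23,5,24,26])) (L[15,26,5,8,23])))) (L[5,30,15,23,33])) (L[5,30,7,15,28])) (L[3,23,5,15,22])) (L[3,28,5,15,18]))) (S 11 (S 14 (L[2,11,4,12,14]) (S 15 (S 25 (S 22 (L[2,22,12,15,25]) (S 27 (L[2,27,12,15,25]) (S 7 (S 17 (L[2,7,15,17,25]) (L[1,17,14,27,35])) (L[1,7,14,22,35])))) (L[23,28,10,13,25])) (L[3,23,5,13,15]))) (L[3,30,1,11,13])))))) (S 31 (S 25 (S 9 (S 17 (S 5 (L[5,25,2,4,17]) (S 30 (L[25,30,2,4,17]) (S 15 (L[0,25,2,15,17]) (S 7 (L[2,7,4,17,25]) (L[5,30,7,15,28]))))) (S 11 (S 8 (S 21 (L[9,29,8,11,21]) (S 26 (L[9,29,8,11,26]) (S 32 (L[9,29,8,11,32]) (S 5 (S 18 (L[20,31,5,8,18]) (S 6 (L[6,31,5,8,29]) (L[3,19,6,18,21]))) (S 18 (S 15 (L[0,25,8,15,18]) (S 16 (L[18,29,8,16,31]) (S 14 (S 33 (S 22 (S 7 (L[22,33,4,7,14]) (L[17,28,5,7,15])) (L[5,32,3,15,22])) (L[5,16,15,23,33]))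 (L[16,32,14,15,17])))) (L[3,28,5,18,26])))))) (S 14 (S 21 (L[4,31,2,14,21]) (S 32 (L[4,29,11,14,32]) (S 6 (S 27 (L[14,25,4,6,27]) (S 16 (L[4,29,6,14,16]) (S 34 (S 24 (S 5 (L[6,31,5,24,34]) (S 26 (L[24,29,11,14,26]) (L[5,16,8,23,26]))) (L[16,27,1,3,24])) (L[1,10,8,27,34])))) (S 13 (S 34 (S 16 (L[14,34,13,16,31]) (L[16,21,6,8,23])) (L[23,34,6,8,21])) (L[21,32,3,6,13]))))) (S 16 (S 22 (S 15 (S 7 (L[4,15,7,22,25]) (S 32 (L[4,15,22,25,32]) (S 24 (S 35 (S 6 (L[24,35,6,9,16]) (S 13 (S 34 (L[0,16,13,15,34]) (L[8,19,6,32,34])) (L[3,14,6,13,32]))) (L[7,32,14,17,35])) (L[7,32,14,17,24])))) (S 5 (S 7 (L[5,25,4,7,22]) (S 24 (S 30 (S 32 (L[24,30,9,11,32]) (L[7,32,14,15,17])) (L[14,30,7,15,17])) (L[15,24,7,14,17]))) (S 7 (S 26 (S 33 (L[4,26,7,25,33]) (L[8,33,5,15,23])) (L[15,26,5,8,23])) (L[8,17,5,7,15])))) (S 24 (S 26 (L[11,16,9,24,26]) (S 35 (S 6 (L[24,35,6,9,16]) (S 32 (L[24,35,9,11,32]) (S 34 (S 5 (L[5,16,24,31,34]) (L[6,26,5,8,23])) (L[1,32,19,22,34])))) (L[1,12,14,22,35]))) (L[3,14,1,22,24]))) (S 13 (S 24 (S 34 (S 5 (L[13,24,5,31,34]) (S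 26 (L[9,34,11,24,26]) (L[5,16,8,23,26]))) (L[8,19,1,16,34])) (L[3,14,1,16,24])) (L[3,14,1,13,16]))))) (S 18 (S 13 (S 8 (S 21 (L[18,29,0,8,21]) (S 5 (L[20,31,5,8,18]) (S 15 (L[0,25,8,15,18]) (S 16 (L[18,29,8,16,31]) (S 34 (S 33 (S 35 (L[0,20,18,33,35]) (S 32 (L[8,13,31,32,34]) (S 14 (S 22 (S 7 (L[22,33,4,7,14]) (L[17,28,5,7,15])) (L[5,32,3,15,22])) (L[11,16,1,14,35])))) (L[5,16,15,23,33])) (L[1,21,11,19,34])))))) (S 34 (S 21 (L[0,31,13,21,34]) (L[10,21,8,11,23])) (L[8,19,1,11,34]))) (L[1,10,3,11,13])) (L[3,19,1,11,18])))) (S 27 (S 22 (S 17 (L[2,27,4,17,25]) (S 7 (S 15 (L[4,15,7,22,25]) (S 24 (L[4,24,7,22,25]) (S 30 (L[4,20,7,22,30]) (S 33 (S 16 (S 18 (S 26 (L[26,31,16,18,33]) (S 5 (L[5,16,18,31,33]) (S 6 (L[7,27,4,6,25]) (L[6,26,3,5,24])))) (L[17,28,15,18,30])) (L[19,24,9,16,17])) (L[10,30,9,12,33]))))) (L[17,28,7,9,10]))) (L[10,19,9,12,22])) (L[12,28,9,10,27]))) (S 22 (S 27 (S 33 (S 7 (S 5 (L[22,33,4,5,7]) (S 14 (L[22,33,4,7,14]) (S 35 (L[22,33,7,20,35]) (S 11 (S 18 (S 15 (L[7,18,0,15,33]) (S 26 (L[7,18,0,26,33]) (S 8 (S 24 (S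 16 (L[18,29,8,16,31]) (S 32 (L[11,31,8,29,32]) (S 9 (S 17 (L[7,27,9,17,24]) (L[16,32,14,15,17])) (L[1,26,9,16,19])))) (L[3,23,5,24,26])) (L[15,26,5,8,23])))) (L[10,35,18,25,28])) (L[1,12,11,14,35]))))) (S 8 (S 9 (S 26 (L[9,29,8,26,27]) (L[10,26,7,25,28])) (L[9,25,7,10,28])) (L[8,28,7,10,25]))) (L[12,23,10,25,33])) (L[12,28,10,25,27])) (L[12,23,10,22,25]))) (S 18 (S 33 (S 21 (L[0,20,18,21,33]) (S 35 (L[0,20,18,33,35]) (S 24 (S 8 (S 26 (L[18,29,0,8,26]) (S 15 (L[8,33,0,15,18]) (S 5 (L[8,33,5,18,20]) (S 7 (S 30 (L[4,20,7,30,33]) (S 22 (S 14 (L[22,33,4,7,14]) (S 25 (L[22,33,4,7,25]) (S 11 (S 6 (S 9 (L[8,24,6,7,9]) (S 16 (L[18,29,6,8,16]) (L[1,26,9,16,19]))) (S 32 (S 34 (L[29,34,8,11,32]) (L[6,31,19,21,34])) (L[23,32,6,25,35]))) (L[1,12,11,14,35])))) (L[5,30,12,15,22]))) (L[5,10,7,28,31]))))) (L[10,21,8,23,31])) (L[3,23,21,24,31])))) (L[12,23,10,31,33])) (L[3,28,10,18,31])))))) (S 18 (S 22 (S 27 (S 13 (S 5 (S 12 (L[2,22,4,5,12]) (S 23 (L[2,22,4,5,23]) (S 33 (S 7 (L[22,33,4,5,7]) (S 17 (S 8 (S 14 (L[4,29,14,17,27]) (S 35 (L[2,18,0,17,35])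 (S 25 (L[5,25,2,4,17]) (S 6 (L[18,29,5,6,8]) (L[14,25,6,7,35]))))) (L[7,23,8,10,20])) (L[10,19,7,17,20]))) (L[12,23,10,20,33])))) (S 7 (S 33 (S 15 (L[7,18,0,15,33]) (S 26 (L[7,18,0,26,33]) (S 35 (L[7,18,0,33,35]) (S 14 (L[22,33,4,7,14]) (S 25 (L[22,33,4,7,25]) (S 30 (L[22,33,4,7,30]) (S 34 (S 6 (S 8 (L[29,34,6,8,27]) (S 23 (S 16 (L[6,33,4,16,23]) (S 9 (S 17 (S 24 (L[9,34,17,24,27]) (L[1,26,14,16,24])) (L[15,35,14,16,17])) (L[1,26,8,9,16]))) (L[20,25,8,10,23]))) (S 24 (S 32 (S 9 (L[7,32,9,22,24]) (S 11 (L[13,24,11,32,34]) (L[19,30,1,9,11]))) (L[14,25,6,32,35])) (L[6,26,3,5,24]))) (S 11 (S 16 (S 8 (S 6 (L[18,29,6,8,16]) (S 21 (L[18,29,8,11,21]) (S 31 (L[18,29,8,16,31]) (L[6,31,19,21,34])))) (L[15,26,5,8,34])) (L[19,35,1,16,34])) (L[19,35,1,11,34]))))))))) (S 12 (S 23 (S 15 (L[12,23,0,2,15]) (S 35 (L[12,23,0,2,35]) (S 21 (L[2,13,0,21,23]) (S 26 (L[2,13,0,23,26]) (S 14 (L[2,22,4,12,14]) (S 34 (S 16 (S 32 (S 6 (L[23,34,6,13,16]) (S 24 (S 9 (L[22,27,9,12,24]) (S 11 (L[13,24,11,32,34]) (L[6,11,9,19,21]))) (L[3,14,6,21,24]))) (L[15,35,14,32,33]))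 (L[15,26,14,16,33])) (L[15,26,5,33,34]))))))) (L[5,10,20,23,33])) (L[5,10,12,20,33]))) (S 8 (S 17 (S 28 (S 26 (L[0,27,8,26,29]) (S 14 (L[4,29,14,17,27]) (S 35 (L[17,28,0,2,35]) (S 25 (L[17,28,2,4,25]) (S 6 (S 16 (L[18,29,6,8,16]) (S 9 (L[9,29,6,8,27]) (L[1,26,9,16,19]))) (L[14,25,6,7,35])))))) (L[5,10,7,20,28])) (L[5,10,7,17,20])) (L[5,10,7,8,20])))) (L[1,10,3,13,20])) (L[3,19,1,20,27])) (L[3,19,1,20,22])) (L[3,19,1,18,20])))"
lemma P7: "chk [29, 4, 2, 0] [19, 3, 1] C7"
  unfolding C7_def by (simp add: adjb_def inD_def)

definition C8 :: cert where "C8 = S 11 (S 16 (S 22 (S 27 (S 14 (S 6 (L[16,27,4,6,14]) (S 21 (L[2,11,4,14,21]) (S 32 (L[11,22,4,14,32]) (L[21,32,6,19,29])))) (S 23 (S 21 (L[0,4,2,21,23]) (S 5 (L[2,22,4,5,23]) (S 25 (L[2,22,4,23,25]) (S 6 (S 31 (S 10 (L[0,31,2,10,23]) (S 33 (L[6,33,4,16,23]) (S 8 (L[4,8,6,16,23]) (S 13 (L[4,13,6,16,23]) (S 18 (S 12 (S 15 (L[12,23,0,2,15]) (S 26 (S 28 (L[26,31,16,18,28]) (L[3,28,5,13,15])) (L[15,26,3,5,13]))) (L[13,33,10,12,25])) (L[1,10,8,18,25])))))) (L[3,14,21,29,31])) (L[3,14,6,21,29]))))) (S 25 (S 17 (L[2,27,4,17,25])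 (S 32 (S 24 (L[4,24,22,25,32]) (S 35 (L[4,35,22,25,32]) (S 6 (L[27,32,4,6,25]) (S 7 (L[7,32,4,22,25]) (L[24,35,6,7,14]))))) (L[14,19,17,29,32]))) (S 30 (S 12 (L[2,11,4,12,30]) (S 17 (L[2,27,4,17,30]) (S 32 (L[11,22,4,30,32]) (S 6 (S 31 (S 24 (S 34 (L[6,31,16,24,34]) (L[29,34,17,19,32])) (L[24,29,14,17,32])) (L[14,19,12,29,31])) (L[3,14,6,29,32]))))) (S 31 (S 6 (S 5 (S 28 (L[4,31,2,5,28]) (S 7 (L[6,22,4,5,7]) (S 15 (S 17 (L[4,15,2,5,17]) (S 9 (S 10 (S 24 (S 8 (L[11,27,8,9,10]) (S 26 (L[6,26,9,16,24]) (L[7,23,8,25,26]))) (L[14,25,7,17,24])) (L[17,28,7,10,25])) (L[19,30,7,9,17]))) (L[25,30,7,15,28])))) (S 18 (S 8 (L[6,31,8,16,18]) (S 26 (S 33 (L[26,31,16,18,33]) (S 20 (S 15 (S 10 (S 17 (L[0,16,15,17,18]) (S 32 (S 12 (L[10,15,0,2,12]) (S 35 (S 7 (L[7,32,20,22,35]) (S 9 (L[9,20,22,32,35]) (L[19,30,7,9,17]))) (L[14,25,12,33,35]))) (L[14,19,17,29,32]))) (L[8,33,10,23,25])) (L[8,33,5,15,23])) (L[5,30,20,23,33]))) (L[5,25,8,23,26]))) (S 20 (S 26 (S 10 (S 17 (L[0,20,2,10,17]) (S 32 (S 35 (S 7 (L[7,32,20,22,35]) (S 9 (L[9,20,22,32,35])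 (L[19,30,7,9,17]))) (L[1,17,18,25,35])) (L[14,19,17,29,32]))) (S 8 (S 33 (S 7 (L[8,33,0,7,26]) (S 9 (L[16,27,6,8,9]) (S 17 (S 28 (S 13 (L[26,31,13,16,28]) (S 15 (L[17,28,0,2,15]) (L[10,15,13,23,25]))) (L[10,30,7,9,28])) (L[10,19,7,9,17])))) (L[18,23,10,25,33])) (L[18,23,8,10,25]))) (L[18,29,3,5,26])) (L[3,19,1,18,20])))) (S 13 (S 21 (S 32 (S 28 (L[4,13,11,21,28]) (S 8 (S 9 (L[21,32,8,9,11]) (S 18 (L[0,11,8,18,21]) (S 20 (S 35 (S 7 (L[7,32,20,22,35]) (L[19,30,6,7,9])) (L[1,6,18,25,35])) (L[1,28,18,20,30])))) (S 5 (S 7 (S 24 (S 26 (L[0,5,7,24,26]) (L[6,26,8,23,25])) (L[8,24,6,23,25])) (L[7,23,6,8,25])) (L[23,29,5,6,8])))) (L[3,14,6,29,32])) (L[3,14,6,21,29])) (L[25,30,6,13,23]))) (S 12 (S 21 (S 28 (L[0,4,2,21,28]) (S 5 (L[2,22,4,5,12]) (L[3,28,5,29,31]))) (L[3,14,21,29,31])) (L[14,19,12,29,31]))))))) (L[3,19,1,27,29])) (L[3,19,1,22,29])) (L[3,19,1,16,29])) (L[3,19,1,11,29])"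
lemma P8: "chk [4, 2, 0] [29, 19, 3, 1] C8"
  unfolding C8_def by (simp add: adjb_def inD_def)

definition C9 :: cert where "C9 = S 11 (S 16 (S 22 (S 27 (S 5 (S 15 (S 12 (L[0,5,2,12,15]) (S 17 (L[0,5,2,15,17]) (S 23 (L[0,5,2,15,23]) (S 28 (L[0,5,2,15,28]) (S 33 (S 7 (L[22,33,5,7,15]) (S 34 (L[22,33,5,15,34]) (S 18 (L[0,5,15,18,33]) (S 25 (S 30 (S 32 (L[25,30,15,22,32]) (S 19 (S 14 (S 31 (L[15,31,14,16,33]) (S 35 (L[15,35,14,16,33]) (S 20 (S 21 (L[2,22,19,20,21]) (L[3,28,18,21,31])) (L[7,18,17,20,35])))) (L[7,32,4,14,17])) (L[4,34,17,19,32]))) (L[17,28,4,7,30])) (L[17,28,4,7,25]))))) (S 25 (S 30 (S 7 (L[5,25,7,15,22]) (S 32 (L[25,30,15,22,32]) (S 14 (S 19 (S 6 (S 9 (L[16,27,6,9,19]) (S 24 (L[16,27,6,14,24]) (S 35 (L[16,27,6,14,35]) (L[24,35,7,9,17])))) (S 21 (S 13 (S 24 (L[13,24,11,14,21]) (L[4,24,3,6,32])) (L[4,13,3,6,32])) (L[21,32,3,4,6]))) (L[7,32,4,17,19])) (L[17,33,4,7,14])))) (L[12,23,4,30,33])) (L[12,23,4,25,33]))))))) (S 20 (S 12 (L[2,22,5,12,20]) (S 23 (L[2,22,5,20,23]) (S 30 (S 17 (L[5,30,2,17,20]) (S 7 (L[5,30,7,20,22]) (S 14 (S 6 (S 24 (L[16,27,6,14,24])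 (S 29 (L[16,27,6,14,29]) (S 35 (L[16,27,6,14,35]) (S 9 (S 32 (L[6,11,9,30,32]) (S 19 (L[16,27,6,9,19]) (L[4,29,17,19,32]))) (L[24,35,7,9,17]))))) (S 21 (S 19 (L[2,22,19,20,21]) (L[6,17,4,7,19])) (L[3,23,4,6,21]))) (L[4,15,7,14,17])))) (S 33 (S 7 (L[22,33,5,7,20]) (S 17 (S 28 (L[17,28,2,5,20]) (L[4,15,7,28,30])) (L[4,15,7,17,30]))) (L[12,23,4,30,33]))))) (S 13 (S 18 (S 8 (S 6 (L[5,16,6,8,18]) (S 21 (L[0,11,8,18,21]) (S 32 (S 24 (S 14 (L[13,24,11,14,32]) (L[3,14,4,6,21])) (L[4,24,3,6,21])) (L[21,32,3,4,6])))) (S 12 (S 10 (L[2,13,0,10,12]) (S 31 (L[2,13,5,12,31]) (S 7 (S 23 (S 29 (S 14 (L[13,29,11,12,14]) (S 19 (L[0,11,12,19,29]) (S 21 (L[0,11,13,21,23]) (S 24 (S 34 (S 32 (L[5,32,22,24,34]) (S 17 (L[7,34,0,17,24]) (L[14,19,4,17,32]))) (L[8,19,21,31,34])) (L[3,14,21,24,31]))))) (L[3,8,10,29,31])) (L[20,31,8,10,23])) (L[20,31,7,8,10])))) (S 33 (S 26 (L[0,5,18,26,33]) (S 31 (L[5,16,18,31,33]) (S 35 (L[0,16,18,33,35]) (S 7 (S 10 (L[7,18,0,10,33]) (S 23 (S 29 (S 21 (L[0,11,13,21,23]) (S 24 (L[7,23,5,22,24]) (S 6 (L[5,16,6,13,23])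 (S 14 (S 9 (S 34 (S 30 (L[22,33,7,9,30]) (S 32 (L[14,34,11,13,32]) (S 17 (L[16,27,14,17,29]) (L[30,35,17,20,32])))) (L[3,34,6,21,24])) (L[3,9,6,21,24])) (L[4,24,6,14,21]))))) (L[3,8,10,29,31])) (L[20,31,8,10,23]))) (S 10 (S 25 (L[0,25,10,18,33]) (L[15,26,7,8,25])) (L[20,31,7,8,10])))))) (S 14 (S 25 (S 30 (S 32 (L[14,30,11,13,32]) (S 34 (S 35 (S 23 (L[2,22,23,25,35]) (S 7 (L[14,25,7,22,35]) (S 10 (L[0,11,10,13,34]) (L[7,23,8,10,20])))) (L[12,32,20,33,35])) (L[8,33,15,32,34]))) (L[4,15,12,30,33])) (L[4,15,12,25,33])) (L[4,15,12,14,33]))))) (S 8 (S 19 (S 35 (S 10 (S 21 (S 9 (L[11,27,8,9,10]) (S 28 (L[0,11,10,13,28]) (S 17 (L[10,19,0,2,17]) (S 25 (S 6 (L[8,35,6,25,27]) (S 7 (L[0,25,7,8,10]) (S 24 (S 14 (L[13,24,11,14,21]) (L[4,15,7,14,17])) (L[6,17,7,9,24])))) (L[17,28,15,18,25]))))) (L[1,21,3,18,20])) (L[1,10,3,18,20])) (L[3,35,1,18,20])) (L[3,19,1,18,20])) (L[3,8,1,18,20]))) (S 18 (S 30 (S 10 (S 21 (S 32 (S 9 (L[11,22,9,30,32]) (S 28 (L[0,11,10,18,28]) (S 19 (L[0,11,18,19,21]) (S 23 (L[10,21,0,2,23]) (S 17 (L[2,18,0,10,17]) (S 33 (L[10,21,0,18,33])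 (S 7 (S 25 (S 35 (L[7,32,22,25,35]) (S 12 (L[0,25,2,10,12]) (L[9,20,12,33,35]))) (L[23,28,13,15,25])) (L[4,9,7,17,19])))))))) (L[1,32,3,13,20])) (L[1,21,3,13,20])) (L[1,10,3,13,20])) (L[3,30,1,13,20])) (L[13,18,1,3,20]))))) (S 6 (S 14 (S 24 (L[16,27,6,14,24]) (S 29 (L[16,27,6,14,29]) (S 35 (L[16,27,6,14,35]) (S 26 (S 31 (S 13 (L[6,26,13,14,16]) (S 33 (L[26,31,14,16,33]) (S 7 (S 28 (L[2,7,0,26,28]) (S 15 (S 25 (L[14,25,7,15,22]) (S 12 (L[2,22,12,14,15]) (L[4,35,12,25,33]))) (L[3,28,5,13,15]))) (S 12 (S 15 (L[2,22,12,14,15]) (L[4,15,5,7,33])) (L[7,12,4,5,33]))))) (L[24,29,3,5,31])) (L[24,29,3,5,26]))))) (S 9 (S 8 (L[16,27,6,8,9]) (S 24 (L[16,27,6,9,24]) (S 35 (L[16,27,6,9,35]) (S 7 (S 30 (L[7,27,6,9,30]) (S 26 (S 28 (L[2,7,0,26,28]) (S 33 (L[0,9,7,26,33]) (S 12 (S 23 (S 13 (L[6,26,13,16,23]) (S 15 (L[12,23,0,2,15]) (L[3,28,5,13,15]))) (L[5,30,4,23,33])) (L[4,35,12,14,33])))) (S 13 (S 23 (S 34 (L[23,34,6,13,16]) (L[3,34,5,24,26])) (L[8,24,5,23,26])) (L[13,24,3,5,26])))) (S 17 (S 33 (S 26 (S 28 (L[28,33,9,16,26]) (S 30 (L[2,27,9,17,30])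 (L[5,30,4,7,28]))) (L[8,24,5,7,26])) (L[5,14,4,7,33])) (L[5,14,4,7,17])))))) (S 34 (S 8 (L[16,27,6,8,34]) (S 24 (L[16,27,6,24,34]) (S 13 (S 23 (L[23,34,6,13,16]) (S 21 (L[16,21,6,13,34]) (S 31 (L[6,31,13,16,34]) (L[5,21,8,23,31])))) (S 26 (S 31 (S 20 (S 33 (L[26,31,16,33,34]) (S 7 (S 12 (S 30 (L[2,22,12,20,30]) (S 28 (L[2,7,0,26,28]) (S 23 (S 15 (L[12,23,0,2,15]) (L[3,28,5,13,15])) (L[5,30,4,23,33])))) (L[5,14,4,12,33])) (L[5,14,4,7,33]))) (L[1,5,3,13,20])) (L[13,24,3,5,31])) (L[13,24,3,5,26]))))) (S 26 (S 7 (S 28 (L[2,7,0,26,28]) (S 15 (S 23 (L[15,26,0,2,23]) (S 33 (L[15,26,0,7,33]) (S 25 (S 30 (L[25,30,7,15,22]) (L[5,30,4,23,33])) (L[5,25,4,23,33])))) (S 13 (S 18 (S 8 (L[6,26,8,16,18]) (S 23 (L[6,26,13,16,23]) (L[23,34,5,8,15]))) (L[3,28,5,15,18])) (L[3,28,5,13,15])))) (S 17 (S 33 (S 18 (L[0,16,18,26,33]) (S 19 (L[17,26,0,2,19]) (S 20 (S 10 (L[0,20,2,10,17]) (S 35 (L[0,20,2,17,35]) (S 31 (S 28 (S 13 (L[26,31,13,16,28]) (S 15 (L[17,28,0,2,15]) (L[13,18,3,5,15]))) (L[10,35,7,9,28])) (L[5,10,3,18,31])))) (L[3,19,1,18,20]))))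 (L[5,14,4,7,33])) (L[5,14,4,7,17]))) (S 13 (S 24 (S 23 (L[13,24,6,16,23]) (S 8 (S 29 (L[16,27,6,8,29]) (S 18 (S 31 (L[6,31,8,16,18]) (L[26,31,3,5,29])) (L[18,29,3,5,26]))) (L[23,34,5,8,26]))) (L[3,34,5,24,26])) (L[3,34,5,13,26])))))) (S 21 (S 13 (S 24 (S 23 (L[13,24,11,21,23]) (L[3,23,4,5,6])) (L[4,24,3,5,6])) (L[4,13,3,5,6])) (L[5,21,3,4,6])))) (S 20 (S 24 (S 29 (S 14 (S 19 (S 21 (L[0,20,2,19,21]) (S 6 (L[24,29,6,14,16]) (L[21,27,3,4,6]))) (L[3,19,1,4,27])) (L[3,14,1,4,27])) (L[4,29,1,3,27])) (L[4,24,1,3,27])) (L[4,20,1,3,27]))) (S 20 (S 19 (S 21 (L[0,20,2,19,21]) (L[1,21,3,4,22])) (L[3,19,1,4,22])) (L[4,20,1,3,22]))) (S 27 (S 24 (S 29 (S 14 (S 6 (L[24,29,6,14,27]) (L[1,6,3,4,16])) (L[3,14,1,4,16])) (L[4,29,1,3,16])) (L[4,24,1,3,16])) (L[16,27,1,3,4]))) (S 22 (S 24 (S 29 (S 14 (S 21 (L[24,29,14,21,22]) (L[1,21,3,4,11])) (L[3,14,1,4,11])) (L[4,29,1,3,11])) (L[4,24,1,3,11])) (L[11,22,1,3,4]))"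
lemma P9: "chk [2, 0] [4, 3, 1] C9"
  unfolding C9_def by (simp add: adjb_def inD_def)

definition C10 :: cert where "C10 = S 5 (S 6 (S 22 (L[6,22,3,4,5]) (S 16 (L[5,16,3,4,6]) (S 21 (L[5,21,3,4,6]) (S 13 (L[4,13,3,5,6]) (S 24 (L[4,24,3,5,6]) (S 29 (L[4,29,3,5,6]) (S 23 (L[3,23,4,5,6]) (S 11 (S 26 (S 19 (S 34 (L[0,11,19,26,34]) (L[23,34,21,22,24])) (L[1,21,19,22,29])) (L[13,24,16,23,26])) (L[13,24,11,21,23]))))))))) (S 22 (S 21 (L[5,21,3,4,22]) (S 24 (L[4,24,3,5,22]) (S 29 (L[4,29,3,5,22]) (S 7 (L[3,7,4,5,22]) (S 12 (L[3,12,4,5,22]) (S 23 (L[3,23,4,5,22]) (S 8 (S 9 (S 13 (S 34 (S 16 (S 26 (L[9,34,8,16,26]) (S 31 (L[5,16,8,31,34]) (S 10 (S 11 (L[0,11,10,13,34]) (L[21,26,11,23,24])) (L[2,29,10,12,31])))) (L[16,21,6,23,24])) (L[23,34,6,21,24])) (L[13,24,6,21,23])) (L[7,21,6,9,24])) (L[23,29,6,8,21])))))))) (S 26 (S 18 (L[0,5,3,18,26]) (S 24 (L[0,5,3,24,26]) (S 29 (L[0,5,3,26,29]) (S 14 (S 8 (S 7 (L[0,5,7,8,26]) (S 9 (S 25 (S 27 (L[9,25,8,26,27]) (S 34 (L[0,5,8,26,34]) (L[1,6,24,27,34]))) (L[6,22,7,24,25])) (L[6,22,7,9,24]))) (S 11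 (S 21 (L[3,14,4,11,21]) (L[18,29,6,8,21])) (L[18,29,1,8,11]))) (L[24,29,1,14,22]))))) (S 35 (S 9 (S 7 (S 17 (L[0,9,7,17,35]) (S 28 (L[0,9,7,28,35]) (S 33 (L[0,9,7,33,35]) (S 8 (S 10 (L[0,9,7,8,10]) (S 20 (S 31 (L[20,31,5,7,8]) (S 18 (L[7,18,5,8,20]) (L[28,33,10,18,31]))) (L[17,28,2,10,20]))) (S 11 (S 29 (S 10 (L[0,11,3,10,29]) (S 21 (L[4,29,3,11,21]) (S 20 (S 31 (S 18 (L[20,31,3,5,18]) (S 16 (L[5,16,3,29,31]) (L[16,21,6,8,18]))) (L[10,21,2,28,31])) (L[17,28,2,10,20])))) (S 27 (S 12 (L[11,27,9,12,35]) (S 14 (S 21 (L[3,14,4,11,21]) (S 32 (L[3,14,4,11,32]) (L[21,32,6,8,29]))) (L[1,12,14,22,29]))) (L[1,6,8,27,29]))) (S 18 (S 29 (S 10 (L[18,29,0,3,10]) (S 21 (L[18,29,0,3,21]) (S 20 (S 31 (L[20,31,3,5,18]) (L[10,21,2,28,31])) (L[17,28,2,10,20])))) (L[1,26,8,11,29])) (L[1,26,8,11,18]))))))) (S 25 (S 18 (S 17 (L[0,25,17,18,35]) (S 28 (L[0,25,18,28,35]) (S 10 (S 29 (L[18,29,0,3,10]) (S 21 (L[10,21,0,3,18]) (S 8 (L[3,8,0,10,18]) (S 11 (L[0,11,3,10,18]) (L[1,21,8,11,29]))))) (S 20 (S 31 (L[20,31,3,5,18]) (S 8 (L[3,8,5,18,20])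 (L[8,28,7,10,31]))) (L[17,28,2,10,20]))))) (S 19 (S 8 (S 15 (S 13 (L[0,5,3,13,15]) (S 23 (L[0,5,8,15,23]) (S 34 (L[0,5,8,15,34]) (S 11 (S 21 (L[4,9,11,19,21]) (S 16 (S 31 (S 24 (L[5,16,3,24,31]) (L[23,34,21,22,24])) (L[6,31,13,21,23])) (L[6,26,13,16,23]))) (L[23,34,11,13,26]))))) (S 16 (S 17 (L[19,35,9,16,17]) (S 14 (S 33 (L[4,35,14,16,33]) (S 31 (S 13 (L[5,16,3,13,31]) (S 23 (L[5,16,8,23,31]) (S 34 (L[5,16,8,31,34]) (S 11 (S 32 (L[4,35,11,14,32]) (L[6,15,13,32,34])) (L[23,34,11,13,26]))))) (S 10 (S 23 (L[0,25,8,10,23]) (S 27 (L[9,25,8,10,27]) (S 21 (S 13 (L[10,21,0,3,13]) (S 34 (L[10,21,0,8,34]) (S 24 (S 11 (L[4,24,3,11,21]) (L[23,34,11,13,26])) (L[22,27,1,24,34])))) (L[2,33,21,23,31])))) (L[7,18,10,31,33])))) (L[2,7,14,15,17]))) (S 28 (S 33 (S 23 (L[4,35,23,25,33]) (S 12 (L[5,25,4,12,33]) (S 30 (S 13 (S 20 (L[5,30,13,20,28]) (S 24 (S 21 (L[13,24,0,3,21]) (L[2,22,20,21,23])) (L[6,26,16,23,24]))) (L[6,15,13,16,23])) (L[2,22,12,15,30])))) (L[15,26,16,18,33])) (L[15,26,16,18,28])))) (S 11 (S 16 (S 28 (L[11,16,9,28,35]) (S 21 (L[4,9,11,19,21]) (S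 31 (S 29 (L[5,16,3,29,31]) (L[18,29,6,8,21])) (L[8,28,18,21,31])))) (L[1,6,8,16,18])) (L[1,26,8,11,18]))) (S 11 (S 16 (S 28 (L[11,16,9,28,35]) (S 8 (S 32 (L[8,35,9,11,32]) (S 29 (S 34 (S 21 (L[29,34,0,8,21]) (S 31 (L[5,16,3,29,31]) (L[19,28,2,21,31]))) (L[1,32,19,22,34])) (L[1,32,19,22,29]))) (S 21 (S 24 (L[3,9,11,21,24]) (S 14 (L[3,14,4,11,21]) (L[1,7,14,22,24]))) (L[8,19,6,18,21])))) (L[1,6,16,18,19])) (L[1,26,11,18,19])))) (S 8 (S 28 (S 10 (S 13 (L[3,28,0,10,13]) (S 11 (L[8,28,9,10,11]) (S 34 (S 23 (L[23,34,0,8,10]) (L[6,26,13,23,25])) (L[1,26,11,13,34])))) (S 23 (S 15 (L[0,5,8,15,23]) (L[10,15,7,22,25])) (L[10,26,2,23,25]))) (L[2,7,25,26,28])) (L[6,26,7,8,25])))) (S 19 (S 30 (S 11 (S 12 (L[19,30,4,11,12]) (S 21 (L[3,19,4,11,21]) (S 32 (L[3,19,4,11,32]) (S 8 (S 10 (S 28 (S 13 (L[0,11,3,10,13]) (S 23 (L[23,28,4,11,30]) (S 34 (L[0,11,8,10,34]) (L[23,34,6,13,21])))) (L[21,26,2,9,28])) (L[2,22,9,10,12])) (L[21,32,6,8,9]))))) (S 8 (S 28 (S 7 (L[5,30,4,7,28]) (S 10 (S 13 (L[3,28,0,10,13]) (S 34 (S 23 (L[23,34,0,8,10]) (S 21 (L[10,21,0,8,34])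 (L[21,26,11,13,23]))) (L[1,26,11,13,34]))) (S 33 (S 20 (S 12 (L[5,30,12,20,33]) (L[2,11,9,10,12])) (L[9,20,7,10,22])) (L[22,33,7,9,10])))) (L[2,11,9,26,28])) (L[1,26,8,9,11]))) (L[2,22,1,9,30])) (L[2,22,1,9,19]))) (S 9 (S 14 (S 20 (S 25 (S 18 (S 31 (L[20,31,3,5,18]) (S 13 (L[13,18,3,5,20]) (S 10 (L[0,20,3,10,18]) (S 28 (L[3,28,5,18,20]) (L[2,13,10,28,31]))))) (S 16 (S 11 (S 21 (L[3,14,4,11,21]) (S 32 (L[3,14,4,11,32]) (S 34 (S 8 (S 10 (L[9,34,8,10,11]) (S 15 (L[0,5,8,15,34]) (S 31 (L[5,16,8,31,34]) (S 28 (S 30 (L[4,9,11,28,30]) (S 17 (S 19 (L[4,9,16,17,19]) (L[6,31,18,19,21])) (L[2,18,15,17,30]))) (L[2,18,10,28,31]))))) (S 29 (S 19 (S 31 (L[29,34,16,19,31]) (L[6,31,8,18,21])) (L[8,19,6,18,21])) (L[18,29,6,8,21]))) (L[1,32,22,34,35])))) (S 8 (S 19 (S 30 (S 34 (S 31 (L[5,16,8,31,34]) (S 28 (S 13 (L[5,30,13,20,28]) (S 21 (L[8,19,0,21,34]) (S 7 (L[5,25,4,7,28]) (S 23 (S 33 (L[5,30,20,23,33]) (S 10 (L[23,34,0,8,10]) (L[7,18,10,31,33]))) (L[21,26,11,13,23]))))) (L[26,35,11,18,28]))) (L[18,34,1,11,35])) (L[30,35,1,11,18])) (L[19,35,1,11,18]))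 (L[8,35,1,11,18]))) (L[1,6,16,18,35]))) (L[2,22,1,25,35])) (L[2,22,1,20,35])) (L[2,22,1,14,35])) (L[2,22,1,9,35])))))) (S 6 (S 16 (S 27 (L[16,27,3,4,6]) (S 24 (L[4,24,3,6,16]) (S 29 (L[4,29,3,6,16]) (S 14 (L[3,14,4,6,16]) (L[24,29,1,14,27]))))) (S 21 (S 32 (L[21,32,3,4,6]) (S 11 (L[6,11,3,4,21]) (S 22 (L[6,22,3,4,21]) (S 24 (L[4,24,3,6,21]) (S 29 (L[4,29,3,6,21]) (S 23 (L[3,23,4,6,21]) (S 34 (S 8 (L[0,6,8,21,34]) (L[1,32,8,11,29])) (L[23,34,5,22,24])))))))) (S 20 (S 27 (S 24 (L[4,24,3,6,27]) (S 29 (L[4,29,3,6,27]) (S 14 (L[3,14,4,6,27]) (L[24,29,1,14,16])))) (S 32 (S 11 (L[6,11,3,4,32]) (S 13 (L[4,13,3,6,32]) (S 14 (L[3,14,4,6,32]) (L[1,21,11,13,14])))) (S 9 (S 14 (S 7 (S 25 (L[14,25,4,6,7]) (S 17 (L[6,17,4,7,14]) (S 24 (L[4,24,6,7,14]) (L[27,32,17,24,25])))) (S 28 (S 8 (S 23 (S 25 (L[4,8,6,23,25]) (S 10 (L[0,20,8,10,23]) (S 12 (S 17 (S 35 (S 22 (L[4,35,12,14,22]) (S 33 (L[4,35,12,14,33]) (S 15 (S 18 (L[0,20,17,18,35]) (S 26 (L[15,26,0,8,23]) (L[10,26,18,25,33]))) (L[7,32,15,22,25])))) (L[2,27,1,25,35]))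 (L[2,7,10,17,25])) (L[2,27,10,12,25])))) (S 31 (S 12 (S 33 (L[4,31,12,14,33]) (S 15 (S 26 (S 13 (L[15,26,0,3,13]) (S 34 (L[15,26,0,8,34]) (S 11 (S 24 (L[0,11,3,24,26]) (L[13,24,1,16,34])) (L[11,16,1,13,34])))) (L[5,16,23,26,33])) (L[5,16,15,23,33]))) (S 15 (S 13 (L[3,28,0,13,15]) (S 26 (S 11 (L[8,28,9,11,26]) (S 10 (S 34 (L[10,15,0,8,34]) (L[23,34,11,13,21])) (L[12,23,10,11,13]))) (L[2,13,5,23,26]))) (L[12,23,2,5,15]))) (L[5,21,2,23,31]))) (S 29 (S 10 (L[3,28,0,10,29]) (S 26 (L[3,28,0,26,29]) (S 24 (S 23 (S 25 (L[4,24,6,23,25]) (L[10,26,7,8,25])) (L[7,23,5,8,26])) (L[8,24,5,7,26])))) (L[16,27,1,8,29]))) (S 15 (S 26 (S 13 (L[15,26,0,3,13]) (S 18 (L[15,26,0,3,18]) (S 11 (S 24 (L[3,9,11,24,26]) (S 29 (L[3,14,11,26,29]) (S 8 (S 34 (L[9,34,8,11,26]) (L[13,24,1,16,34])) (L[18,29,1,8,16])))) (L[13,18,11,21,28])))) (L[2,7,5,26,28])) (L[2,7,5,15,28])))) (S 24 (S 29 (S 35 (S 7 (L[24,35,6,7,9]) (S 26 (L[24,29,0,3,26]) (S 28 (S 33 (S 12 (L[0,9,12,33,35]) (S 13 (S 23 (L[0,20,23,33,35]) (S 15 (L[3,28,0,13,15]) (L[12,23,2,5,15]))) (L[1,26,13,14,16])))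 (L[5,14,7,26,33])) (L[2,7,5,26,28])))) (L[2,16,1,14,35])) (L[16,27,1,14,29])) (L[16,27,1,14,24]))) (S 8 (S 19 (S 24 (S 30 (S 35 (S 7 (L[19,30,4,6,7]) (S 10 (S 13 (L[0,20,3,10,13]) (S 23 (L[0,20,8,10,23]) (S 15 (S 26 (S 34 (L[10,15,0,8,34]) (S 11 (L[0,11,3,24,26]) (L[11,16,1,13,34]))) (L[5,16,13,23,26])) (L[5,16,13,15,23])))) (S 28 (S 12 (S 17 (S 33 (L[30,35,12,20,33]) (S 13 (L[12,28,13,20,30]) (S 18 (L[0,20,17,18,19]) (S 26 (S 34 (L[19,24,0,17,34]) (S 11 (L[0,11,3,24,26]) (L[11,16,1,13,34]))) (L[5,16,18,26,33]))))) (L[2,7,9,10,17])) (L[2,27,9,10,12])) (L[10,21,2,9,28])))) (L[2,16,1,9,35])) (L[2,27,1,9,30])) (L[16,27,1,9,24])) (L[2,16,1,9,19])) (L[16,27,1,8,9]))))) (S 19 (S 23 (S 27 (L[3,19,4,6,27]) (S 30 (S 7 (L[19,30,4,6,7]) (S 22 (L[6,22,4,23,30]) (S 33 (L[6,33,4,23,30]) (L[22,33,5,7,20])))) (L[2,27,1,20,30]))) (L[5,21,2,20,23])) (L[1,21,2,19,20]))))) (S 7 (S 17 (S 19 (L[0,4,7,17,19]) (S 18 (S 15 (L[7,18,0,15,17]) (S 35 (L[7,18,0,17,35]) (S 9 (S 20 (S 24 (L[0,9,7,17,24]) (S 30 (L[4,9,7,17,30]) (S 28 (S 25 (L[17,28,4,7,25])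 (S 32 (S 22 (L[4,20,3,22,32]) (L[24,35,1,22,25])) (L[24,35,6,25,32]))) (L[5,30,2,15,28])))) (L[19,35,1,2,20])) (L[19,35,1,2,9])))) (S 20 (S 35 (L[0,20,7,17,35]) (S 25 (S 14 (L[14,25,4,7,17]) (S 27 (L[7,27,4,17,25]) (S 32 (L[7,32,4,17,25]) (L[27,32,6,14,35])))) (L[1,6,18,25,35]))) (L[2,18,1,19,20])))) (S 15 (S 25 (S 8 (L[0,25,7,8,15]) (S 28 (L[0,25,7,15,28]) (S 13 (S 26 (L[15,26,0,3,13]) (S 23 (L[3,23,0,13,15]) (L[23,28,2,5,26]))) (S 34 (S 26 (S 31 (S 18 (L[15,26,0,3,18]) (S 19 (L[7,34,0,19,26]) (S 16 (S 29 (L[26,31,3,16,29]) (L[18,29,5,6,8])) (L[8,19,1,16,18])))) (L[2,13,5,28,31])) (L[2,13,5,26,28])) (L[8,13,5,6,34]))))) (S 35 (S 28 (L[15,35,0,7,28]) (S 20 (S 10 (S 18 (L[0,20,3,10,18]) (S 8 (L[0,20,7,8,10]) (L[5,25,6,8,18]))) (L[17,28,2,10,25])) (L[17,28,2,5,20]))) (L[1,17,2,25,35]))) (S 28 (S 25 (S 30 (L[25,30,4,7,28]) (L[5,30,2,15,17])) (L[5,25,2,15,17])) (L[17,28,2,5,15])))) (S 8 (S 24 (S 26 (S 13 (L[13,24,0,3,26]) (S 23 (L[8,24,0,23,26]) (S 34 (L[3,34,0,24,26]) (L[23,34,5,6,13])))) (S 28 (S 13 (S 15 (L[3,28,0,13,15])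 (S 23 (S 33 (S 12 (S 35 (L[12,23,0,33,35]) (S 25 (L[12,23,4,25,33]) (S 30 (L[12,23,4,30,33]) (S 9 (S 27 (S 22 (L[22,27,9,12,24]) (L[5,25,7,15,22])) (L[7,27,6,25,35])) (L[30,35,6,7,9]))))) (S 25 (S 30 (L[25,30,4,23,33]) (L[5,30,2,12,15])) (L[5,25,2,12,15]))) (L[15,26,5,7,33])) (L[15,26,2,5,23]))) (S 23 (S 34 (S 15 (L[23,34,0,8,15]) (S 33 (S 12 (S 17 (S 16 (L[0,16,17,24,34]) (S 27 (L[0,27,17,24,34]) (S 35 (L[24,35,0,17,34]) (S 14 (S 25 (L[14,25,4,12,33]) (L[2,27,1,25,35])) (L[13,35,1,14,16]))))) (L[2,7,5,15,17])) (L[2,13,5,12,15])) (L[15,26,5,7,33]))) (L[6,26,5,13,34])) (L[6,26,5,13,23]))) (L[2,7,5,26,28]))) (S 23 (S 26 (S 25 (L[0,25,8,23,26]) (L[5,25,6,7,24])) (L[6,26,5,7,24])) (L[7,23,5,6,24]))) (S 24 (S 23 (S 26 (S 25 (L[0,25,23,24,26]) (L[5,25,6,7,8])) (L[6,26,5,7,8])) (L[7,23,5,6,8])) (L[8,24,5,6,7])))))"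
lemma P10: "chk [4, 3, 0] [2, 1] C10"
  unfolding C10_def by (simp add: adjb_def inD_def)

definition C11 :: cert where "C11 = S 14 (S 19 (S 25 (S 30 (S 18 (S 21 (L[3,19,0,18,21]) (S 28 (S 10 (L[3,28,0,10,18]) (S 15 (L[3,28,0,15,18]) (S 35 (L[0,25,18,28,35]) (S 5 (S 20 (L[3,28,5,18,20]) (S 31 (L[3,28,5,18,31]) (S 9 (S 22 (S 27 (S 12 (L[22,27,9,12,19]) (L[20,31,2,10,12])) (L[2,27,1,20,35])) (L[2,22,1,20,35])) (L[9,20,1,2,35])))) (S 23 (S 17 (S 16 (L[0,16,17,18,19]) (S 29 (L[18,29,0,17,19]) (S 34 (L[18,34,0,17,19]) (S 8 (S 13 (S 24 (S 11 (S 32 (L[13,24,3,11,32]) (S 6 (L[18,23,6,8,25]) (L[16,32,6,34,35]))) (L[11,16,1,34,35])) (L[24,35,1,16,34])) (L[13,35,1,16,34])) (L[29,34,1,8,16]))))) (L[4,15,2,5,17])) (L[5,21,2,4,23])))))) (S 5 (S 20 (S 31 (L[20,31,3,5,18]) (L[4,31,2,21,28])) (L[4,20,2,21,28])) (L[5,21,2,4,28])))) (S 29 (S 21 (L[3,19,0,21,29]) (S 26 (L[3,19,0,26,29]) (S 31 (S 12 (L[0,31,12,19,29]) (S 16 (L[3,14,16,29,31]) (S 8 (S 5 (L[3,8,5,29,31]) (S 23 (S 15 (L[0,25,8,15,23]) (L[4,15,2,5,12])) (L[12,23,2,4,5]))) (L[1,26,8,16,18])))) (S 23 (S 28 (S 10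 (L[3,28,0,10,29]) (S 8 (S 33 (S 35 (L[0,25,23,33,35]) (S 20 (S 5 (L[8,33,5,20,23]) (S 13 (L[23,28,13,20,30]) (S 34 (S 12 (L[12,23,20,30,33]) (S 17 (L[29,34,0,17,19]) (L[12,17,2,4,5]))) (L[5,10,13,31,34])))) (L[2,18,1,20,35]))) (L[10,21,18,31,33])) (L[10,21,8,18,31]))) (L[4,31,2,21,28])) (L[4,31,2,21,23]))))) (S 8 (S 7 (S 26 (L[8,19,0,7,26]) (S 10 (L[0,25,7,8,10]) (S 15 (L[0,25,7,8,15]) (S 9 (S 17 (L[19,30,7,9,17]) (S 20 (S 5 (S 31 (L[20,31,5,7,8]) (S 28 (L[8,28,5,7,20]) (S 33 (L[8,33,5,7,20]) (L[28,33,10,18,31])))) (L[4,15,2,5,17])) (L[2,18,10,17,20]))) (S 28 (S 35 (L[0,25,7,28,35]) (S 20 (S 17 (L[0,20,7,17,19]) (L[10,35,2,9,17])) (L[9,20,1,2,35]))) (L[10,26,2,9,28])))))) (S 23 (S 10 (L[0,25,8,10,23]) (S 15 (L[0,25,8,15,23]) (S 33 (S 35 (L[0,25,23,33,35]) (S 20 (S 5 (L[8,33,5,20,23]) (S 12 (L[12,23,20,30,33]) (L[4,15,2,5,12]))) (L[2,18,1,20,35]))) (S 5 (S 20 (S 31 (L[20,31,5,8,23]) (L[7,18,10,31,33])) (L[7,18,10,20,33])) (L[4,15,5,7,33]))))) (S 21 (S 34 (L[8,19,0,21,34]) (S 6 (S 24 (L[0,6,3,21,24]) (S 9 (L[8,19,6,9,21])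 (S 22 (S 20 (L[3,19,20,21,22]) (S 35 (S 16 (S 27 (L[16,27,6,14,35]) (L[9,34,1,24,27])) (L[9,34,1,16,24])) (L[9,20,1,2,35]))) (L[1,7,9,22,24])))) (S 5 (S 24 (S 13 (L[13,24,0,3,21]) (S 26 (L[21,26,0,3,24]) (S 11 (L[0,11,3,21,24]) (L[23,34,11,13,26])))) (S 16 (S 27 (S 9 (S 26 (L[16,27,8,9,26]) (S 11 (L[8,19,9,11,21]) (L[23,34,11,24,26]))) (S 11 (S 22 (S 13 (L[0,11,3,13,21]) (S 20 (L[5,21,3,20,22]) (S 26 (S 10 (L[10,26,8,25,27]) (L[2,13,10,20,23])) (L[6,26,7,9,24])))) (L[9,34,1,22,24])) (L[9,34,1,11,24]))) (L[1,6,24,27,34])) (L[4,24,6,16,23]))) (L[7,23,4,5,6])))) (S 5 (S 20 (S 31 (S 13 (L[20,31,3,5,13]) (S 6 (S 22 (S 33 (S 34 (L[6,31,5,8,34]) (S 32 (L[3,19,20,22,32]) (S 15 (L[15,20,3,5,22]) (S 24 (L[20,24,3,5,22]) (S 16 (S 26 (L[26,31,14,16,33]) (S 17 (S 27 (L[19,30,17,20,27]) (L[1,26,24,27,34])) (L[13,17,15,32,34]))) (L[23,34,13,15,16])))))) (L[2,33,4,21,23])) (L[2,22,4,21,23])) (L[2,6,4,21,23]))) (L[4,31,2,21,23])) (L[4,20,2,21,23])) (L[5,21,2,4,23]))))) (S 11 (S 16 (S 21 (S 24 (L[0,11,3,21,24]) (S 34 (L[0,11,19,21,34]) (S 27 (S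 6 (S 9 (L[16,21,6,9,19]) (S 35 (L[16,27,6,14,35]) (S 20 (S 22 (S 12 (S 5 (L[5,21,3,20,22]) (S 15 (L[22,27,12,14,15]) (L[18,34,5,8,15]))) (L[1,12,2,9,35])) (L[24,35,1,9,22])) (L[9,20,1,2,35])))) (S 5 (S 32 (S 9 (L[21,32,9,11,19]) (S 22 (S 20 (L[5,21,3,20,22]) (S 7 (S 35 (L[14,25,7,22,35]) (S 10 (S 17 (L[7,27,10,17,25]) (L[2,18,17,20,35])) (L[1,10,8,18,20]))) (L[8,24,6,7,9]))) (L[9,34,1,22,24]))) (L[29,34,6,8,32])) (L[18,29,5,6,8]))) (L[29,34,1,8,27])))) (S 6 (S 13 (L[3,14,6,13,16]) (S 24 (L[3,14,6,16,24]) (S 20 (S 31 (S 34 (L[6,31,16,19,34]) (S 22 (S 27 (S 10 (L[22,27,3,10,20]) (S 9 (L[16,27,6,9,19]) (S 7 (L[19,30,7,20,22]) (S 17 (S 15 (L[16,27,14,15,17]) (S 32 (L[27,32,17,19,20]) (L[8,13,15,32,34]))) (L[2,7,9,10,17]))))) (L[29,34,1,8,27])) (L[1,21,22,24,34]))) (L[18,29,8,21,31])) (L[1,21,8,18,20])))) (L[18,29,6,8,21]))) (L[18,29,1,8,16])) (L[18,29,1,8,11]))))) (S 9 (S 11 (S 22 (S 12 (L[11,22,9,12,19]) (L[1,12,2,4,30])) (L[2,22,1,4,30])) (L[2,11,1,4,30])) (L[4,9,1,2,30]))) (S 35 (S 22 (S 27 (S 12 (L[22,27,12,14,35]) (L[1,12,2,4,25]))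 (L[2,27,1,4,25])) (L[2,22,1,4,25])) (L[4,35,1,2,25]))) (S 30 (S 9 (S 11 (S 22 (S 12 (L[11,22,9,12,30]) (L[1,12,2,4,19])) (L[2,22,1,4,19])) (L[2,11,1,4,19])) (L[4,9,1,2,19])) (L[19,30,1,2,4]))) (S 25 (S 35 (S 22 (S 27 (S 12 (L[22,27,12,25,35]) (L[1,12,2,4,14])) (L[2,27,1,4,14])) (L[2,22,1,4,14])) (L[4,35,1,2,14])) (L[14,25,1,2,4]))"
lemma P11: "chk [3, 0] [4, 2, 1] C11"
  unfolding C11_def by (simp add: adjb_def inD_def)

definition C12 :: cert where "C12 = S 4 (S 20 (S 5 (S 7 (S 22 (L[4,20,5,7,22]) (S 28 (L[4,20,5,7,28]) (S 33 (L[4,20,5,7,33]) (S 24 (S 6 (L[4,24,5,6,7]) (S 26 (L[0,5,7,24,26]) (S 31 (S 8 (L[20,31,5,7,8]) (S 12 (L[7,12,5,24,31]) (S 23 (L[7,23,5,24,31]) (S 34 (L[7,34,5,24,31]) (S 21 (S 14 (L[5,14,7,24,31]) (S 11 (S 29 (S 19 (L[0,11,19,21,29]) (S 32 (S 30 (L[11,31,29,30,32]) (S 9 (L[21,32,9,11,24]) (L[19,30,1,2,9]))) (L[1,32,19,22,34]))) (L[1,12,14,22,29])) (L[23,34,8,11,26]))) (L[23,34,6,8,21])))))) (S 10 (S 21 (S 8 (L[0,20,7,8,10]) (S 11 (S 14 (L[4,24,11,14,21]) (S 23 (L[4,24,11,21,23]) (S 12 (S 34 (L[0,11,21,24,34])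 (S 30 (S 32 (L[12,32,4,11,30]) (L[14,34,31,32,33])) (L[2,33,23,30,31]))) (L[2,33,12,14,31])))) (S 13 (S 34 (L[10,21,0,13,34]) (L[1,26,8,11,34])) (L[1,26,3,11,13])))) (L[3,28,2,21,31])) (L[3,28,2,10,31]))))) (S 11 (S 14 (S 21 (S 32 (L[21,32,4,11,14]) (L[1,32,3,22,24])) (L[1,21,3,22,24])) (L[3,14,1,22,24])) (L[11,22,1,3,24])))))) (S 12 (S 22 (L[4,20,5,12,22]) (S 33 (L[4,20,5,12,33]) (S 30 (S 13 (L[5,30,12,13,20]) (S 27 (L[4,20,12,27,30]) (S 24 (S 29 (S 11 (L[4,29,11,12,30]) (S 16 (S 14 (S 26 (L[24,29,14,16,26]) (L[1,26,3,11,13])) (L[3,14,1,11,13])) (L[11,16,1,3,13]))) (L[22,27,1,3,29])) (L[22,27,1,3,24])))) (S 9 (S 29 (S 15 (S 13 (L[0,5,12,13,15]) (S 11 (S 10 (L[9,29,10,11,12]) (S 14 (L[4,29,11,12,14]) (S 24 (S 31 (L[24,29,5,12,31]) (L[2,13,3,10,31])) (L[1,7,14,22,24])))) (L[3,30,1,11,13]))) (L[22,33,7,15,30])) (L[3,30,1,22,29])) (L[2,22,1,9,30]))))) (S 9 (S 23 (S 22 (L[4,20,5,22,23]) (S 10 (S 13 (L[0,20,10,13,23]) (S 24 (S 6 (L[4,24,5,6,23]) (S 26 (L[0,5,23,24,26]) (S 11 (S 16 (S 21 (L[4,24,11,21,23]) (S 31 (L[5,16,23,24,31]) (L[6,31,3,13,21])))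 (L[1,6,3,13,16])) (L[1,26,3,11,13])))) (S 11 (S 14 (S 21 (S 32 (L[21,32,4,11,14]) (L[1,32,3,22,24])) (L[1,21,3,22,24])) (L[3,14,1,22,24])) (L[13,24,1,3,11])))) (S 31 (S 8 (L[20,31,5,8,23]) (S 13 (L[20,31,5,13,23]) (S 25 (S 11 (S 6 (L[5,25,4,6,23]) (S 16 (S 24 (L[5,16,23,24,31]) (S 14 (S 21 (S 32 (L[21,32,4,11,14]) (L[13,24,3,6,32])) (L[13,24,3,6,21])) (L[3,14,1,22,24]))) (L[1,6,3,13,16]))) (L[3,12,10,11,13])) (L[8,22,7,10,25])))) (L[3,12,2,10,31])))) (S 25 (S 31 (S 28 (S 13 (L[20,31,5,13,28]) (S 18 (L[20,31,5,18,28]) (S 11 (S 16 (S 30 (L[4,9,11,28,30]) (S 15 (S 27 (L[4,15,25,27,28]) (S 29 (L[5,16,28,29,31]) (L[1,12,27,29,30]))) (L[2,13,12,15,30]))) (L[13,18,1,3,16])) (L[13,18,1,3,11])))) (S 18 (S 8 (L[20,31,5,8,18]) (S 33 (L[20,31,5,18,33]) (S 16 (S 6 (S 19 (L[4,9,6,16,19]) (S 35 (L[9,18,6,16,35]) (S 14 (S 29 (L[6,31,14,16,29]) (S 27 (L[16,27,4,6,14]) (L[1,12,19,27,29]))) (L[2,33,12,14,35])))) (S 34 (S 13 (L[5,16,13,31,34]) (S 24 (L[5,16,24,31,34]) (S 11 (S 21 (S 32 (S 27 (S 14 (L[21,32,4,11,14]) (S 17 (L[27,32,4,17,25]) (L[6,17,7,14,24])))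 (L[1,6,3,24,27])) (L[13,24,3,6,32])) (L[13,24,3,6,21])) (L[13,24,1,3,11])))) (S 21 (S 19 (L[0,20,18,19,21]) (S 11 (S 32 (S 24 (L[21,32,9,11,24]) (S 30 (L[4,9,11,30,32]) (S 15 (S 22 (L[4,15,22,25,32]) (L[3,34,1,22,24])) (L[2,33,12,15,30])))) (L[8,19,6,32,34])) (L[8,19,1,11,34]))) (L[23,34,6,8,21])))) (S 29 (S 15 (S 26 (S 19 (L[18,29,0,19,26]) (S 34 (S 13 (L[15,26,5,13,34]) (S 24 (L[26,31,5,24,34]) (L[13,24,1,3,16]))) (L[8,19,1,16,34]))) (L[8,33,16,23,26])) (L[8,33,15,16,23])) (L[3,8,1,16,29]))))) (S 11 (S 16 (S 8 (S 26 (L[11,16,8,9,26]) (S 29 (L[5,16,8,29,31]) (S 34 (L[5,16,8,31,34]) (S 27 (S 6 (L[16,27,6,8,9]) (S 10 (L[11,27,8,9,10]) (S 22 (S 21 (S 19 (L[11,22,4,19,21]) (S 32 (L[21,32,8,9,11]) (L[29,34,6,19,32]))) (L[18,29,3,6,21])) (L[3,12,10,22,29])))) (L[3,28,26,27,29]))))) (S 19 (S 6 (L[4,9,6,16,19]) (S 21 (L[4,9,11,19,21]) (L[3,8,6,18,21]))) (S 24 (S 26 (L[11,16,9,24,26]) (S 34 (L[5,16,24,31,34]) (S 27 (S 6 (L[16,27,6,9,24]) (S 21 (S 32 (L[21,32,9,11,24]) (L[8,19,6,32,34])) (L[3,8,6,18,21]))) (L[8,19,26,27,34])))) (S 14 (S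 6 (S 27 (L[16,27,4,6,14]) (S 32 (L[16,32,4,6,14]) (S 17 (L[6,17,4,14,16]) (S 29 (L[4,29,6,14,16]) (L[27,32,17,19,29]))))) (S 21 (S 32 (L[21,32,4,11,14]) (S 29 (L[4,29,11,14,21]) (L[3,8,6,29,32]))) (L[18,24,3,6,21]))) (S 27 (S 35 (S 6 (L[16,27,6,9,35]) (S 17 (L[16,27,9,17,35]) (L[6,17,7,14,24]))) (L[1,12,2,14,35])) (L[3,14,1,24,27])))))) (S 29 (S 8 (S 6 (S 26 (L[6,26,5,8,29]) (L[1,26,3,16,18])) (L[1,6,3,16,18])) (L[3,8,1,16,18])) (L[18,29,1,3,16]))) (S 29 (S 8 (S 26 (L[26,31,5,8,29]) (L[1,26,3,11,18])) (L[3,8,1,11,18])) (L[18,29,1,3,11]))))) (S 10 (S 21 (S 19 (S 11 (L[4,9,11,19,21]) (S 18 (L[0,20,18,19,21]) (S 29 (S 16 (S 8 (S 26 (L[9,29,8,16,26]) (L[1,26,3,11,18])) (L[3,8,1,11,18])) (L[11,16,1,3,18])) (L[18,29,1,3,11])))) (S 14 (S 29 (S 22 (L[4,29,14,21,22]) (S 8 (L[10,21,0,8,29]) (S 6 (L[4,29,6,14,21]) (S 16 (S 11 (L[4,29,11,14,21]) (S 24 (S 34 (S 26 (L[24,29,14,16,26]) (S 13 (L[10,21,0,13,34]) (L[1,26,3,11,13]))) (L[8,19,1,11,34])) (L[11,22,1,3,24]))) (L[6,31,8,16,23]))))) (L[2,29,12,19,31])) (L[14,19,2,12,31]))) (L[3,23,2,21,31]))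 (L[3,12,2,10,31]))) (S 10 (S 15 (S 35 (S 27 (S 8 (L[9,20,8,10,27]) (S 17 (L[10,35,9,17,27]) (S 6 (S 24 (L[24,35,6,9,27]) (S 14 (L[4,35,6,14,27]) (L[14,25,7,17,24]))) (L[7,23,6,8,25])))) (S 24 (S 13 (S 28 (L[10,15,0,13,28]) (S 34 (L[10,15,0,13,34]) (S 8 (S 26 (S 18 (L[15,20,5,8,18]) (S 11 (L[10,26,8,9,11]) (S 29 (L[0,5,8,26,29]) (S 16 (L[8,24,9,16,26]) (S 14 (S 21 (S 31 (L[13,24,14,21,31]) (L[3,28,16,18,31])) (L[3,28,11,18,21])) (L[1,12,11,14,29])))))) (L[23,28,2,25,26])) (L[25,34,1,8,27])))) (S 26 (S 34 (L[0,5,24,26,34]) (S 8 (S 11 (S 16 (S 6 (L[8,24,6,9,16]) (S 21 (L[10,21,8,9,11]) (L[3,23,6,13,21]))) (L[3,34,1,13,16])) (L[3,34,1,11,13])) (L[25,34,1,8,27]))) (L[2,13,23,25,26]))) (L[3,25,1,24,27]))) (L[1,12,2,25,35])) (L[12,23,2,15,25])) (L[12,23,2,10,25])))) (S 19 (S 30 (S 27 (S 6 (L[19,30,4,6,27]) (S 17 (L[19,30,4,17,27]) (S 24 (S 10 (S 28 (L[10,30,20,27,28]) (S 26 (S 29 (L[0,27,19,26,29]) (S 16 (S 14 (L[16,27,14,24,26]) (S 32 (S 22 (L[4,20,19,22,32]) (L[3,14,1,22,29])) (L[6,17,14,29,32]))) (L[1,6,3,16,29]))) (L[2,7,9,26,28])))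 (L[2,7,9,10,17])) (L[6,17,7,9,24])))) (S 24 (S 10 (S 26 (S 34 (L[19,24,0,26,34]) (S 8 (S 18 (L[20,26,5,8,18]) (S 29 (L[0,5,8,26,29]) (S 14 (S 16 (S 6 (L[14,19,4,6,16]) (L[1,6,3,27,29])) (L[18,29,1,3,16])) (L[1,12,14,27,29])))) (L[9,34,1,8,27]))) (S 29 (S 8 (S 23 (L[0,20,8,10,23]) (S 11 (L[0,11,8,10,29]) (S 28 (S 13 (L[0,20,10,13,28]) (L[3,23,11,13,26])) (L[2,7,9,26,28])))) (L[7,27,8,9,26])) (L[1,26,3,27,29]))) (L[2,27,9,10,12])) (L[3,9,1,24,27]))) (L[1,12,2,9,30])) (L[1,12,2,9,19]))))) (S 15 (S 26 (S 31 (S 28 (S 13 (L[15,26,0,13,28]) (S 18 (L[15,26,0,18,28]) (S 11 (S 16 (S 6 (S 9 (L[11,16,9,26,28]) (S 29 (L[26,31,16,28,29]) (S 22 (S 12 (S 30 (L[12,28,4,11,30]) (S 19 (L[11,22,4,12,19]) (L[19,30,1,2,9]))) (S 19 (S 14 (L[14,19,4,6,16]) (S 27 (L[16,27,4,6,19]) (S 32 (L[16,32,4,6,19]) (S 17 (L[6,17,4,16,19]) (L[27,32,14,17,29]))))) (L[1,12,2,9,19]))) (L[1,5,3,22,29])))) (L[13,18,3,5,6])) (L[13,18,1,3,16])) (L[13,18,1,3,11])))) (S 8 (S 7 (L[15,26,0,7,8]) (S 18 (L[15,26,0,8,18]) (S 23 (L[15,26,0,8,23]) (S 10 (S 29 (L[10,26,0,8,29])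 (S 11 (S 16 (S 6 (S 22 (S 9 (L[10,26,8,9,11]) (S 30 (S 35 (S 12 (L[10,30,12,20,22]) (S 32 (L[30,35,20,22,32]) (S 19 (S 14 (L[14,19,4,6,16]) (S 27 (L[16,27,4,6,19]) (S 17 (L[6,17,4,16,19]) (L[27,32,14,17,29])))) (L[1,12,2,9,19])))) (L[2,7,9,28,35])) (L[2,7,9,28,30]))) (L[1,5,3,22,29])) (L[18,29,3,5,6])) (L[18,29,1,3,16])) (L[18,29,1,3,11]))) (S 25 (S 11 (S 27 (L[15,26,8,25,27]) (S 29 (L[0,11,8,26,29]) (L[3,28,10,27,29]))) (L[1,10,3,11,18])) (L[23,28,2,10,25])))))) (S 11 (S 16 (S 24 (S 9 (L[11,16,9,24,26]) (S 23 (L[26,31,16,23,24]) (S 34 (L[26,31,16,24,34]) (S 27 (S 30 (S 12 (L[11,27,4,12,30]) (S 6 (S 19 (L[16,27,4,6,19]) (L[1,12,2,9,19])) (L[23,34,5,6,8]))) (L[1,28,2,9,30])) (L[9,34,1,8,27]))))) (S 22 (S 25 (S 12 (L[4,15,12,22,25]) (S 32 (L[4,15,22,25,32]) (S 6 (S 14 (S 27 (L[16,27,4,6,14]) (S 19 (L[14,19,4,6,16]) (S 17 (L[6,17,4,14,16]) (S 29 (L[4,29,6,14,16]) (L[27,32,17,19,29]))))) (S 27 (S 35 (L[4,35,6,25,27]) (L[1,12,2,14,35])) (L[3,14,1,24,27]))) (L[5,32,3,6,24])))) (S 27 (S 35 (S 12 (L[22,27,12,20,35]) (S 10 (S 7 (L[10,35,7,20,22])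 (S 17 (L[10,35,17,20,27]) (S 32 (S 19 (L[4,20,19,22,32]) (S 30 (L[30,35,20,22,32]) (S 9 (L[9,20,22,32,35]) (L[19,30,1,2,9])))) (L[7,32,17,24,25])))) (L[12,28,2,10,25]))) (L[1,28,2,25,35])) (L[3,25,1,24,27]))) (L[1,5,3,22,24]))) (S 18 (S 29 (S 19 (L[18,29,11,19,26]) (S 9 (S 34 (S 24 (L[9,34,11,24,26]) (S 13 (L[0,11,13,26,34]) (L[13,24,1,3,16]))) (L[8,19,1,16,34])) (L[8,19,1,9,16]))) (L[3,8,1,16,29])) (L[3,8,1,16,18]))) (S 18 (S 29 (S 19 (L[18,29,0,19,26]) (S 34 (S 13 (L[15,26,0,13,34]) (S 24 (S 16 (S 14 (L[26,31,14,16,24]) (L[3,14,1,11,13])) (L[11,16,1,3,13])) (L[13,24,1,3,11]))) (L[8,19,1,11,34]))) (L[3,8,1,11,29])) (L[3,8,1,11,18]))))) (S 10 (S 12 (S 13 (L[0,20,10,12,13]) (L[2,13,3,5,31])) (L[3,12,2,5,31])) (L[5,10,2,3,31]))) (S 23 (S 28 (S 13 (L[23,28,0,13,15]) (L[2,13,3,5,26])) (L[3,28,2,5,26])) (L[3,23,2,5,26]))) (S 26 (S 23 (S 28 (S 13 (L[23,28,0,13,26]) (L[2,13,3,5,15])) (L[3,28,2,5,15])) (L[3,23,2,5,15])) (L[15,26,2,3,5])))) (S 19 (S 30 (S 13 (S 22 (S 27 (S 5 (S 10 (S 21 (S 6 (L[21,27,4,6,19]) (S 7 (L[5,19,4,7,22])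 (S 17 (L[19,30,4,17,27]) (S 11 (L[11,22,4,19,21]) (S 32 (L[21,32,4,19,22]) (S 14 (L[14,19,4,21,22]) (S 29 (S 8 (L[0,27,8,10,29]) (S 34 (S 15 (L[0,5,13,15,34]) (L[2,7,14,15,17])) (L[1,32,8,11,34]))) (L[3,14,6,29,32])))))))) (L[1,21,2,3,20])) (L[1,10,2,3,20])) (L[1,5,2,3,20])) (L[2,27,1,3,20])) (L[2,22,1,3,20])) (L[2,13,1,3,20])) (L[3,30,1,2,20])) (L[3,19,1,2,20]))) (S 20 (S 14 (S 19 (S 30 (S 11 (S 16 (S 22 (S 27 (S 21 (S 9 (L[11,22,9,19,21]) (S 12 (L[22,27,12,19,20]) (S 24 (L[11,22,14,21,24]) (S 17 (L[19,30,17,20,27]) (S 32 (L[21,32,19,20,22]) (S 34 (L[20,34,19,21,22]) (S 6 (S 35 (L[16,27,6,14,35]) (L[1,12,2,9,35])) (L[6,17,24,32,34])))))))) (L[1,21,2,3,4])) (L[2,27,1,3,4])) (L[2,22,1,3,4])) (L[2,16,1,3,4])) (L[2,11,1,3,4])) (L[3,30,1,2,4])) (L[3,19,1,2,4])) (L[3,14,1,2,4])) (L[4,20,1,2,3]))"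
lemma P12: "chk [0] [3, 2, 1] C12"
  unfolding C12_def by (simp add: adjb_def inD_def)

definition Ctop :: cert where "Ctop = S 1 (S 2 (C0) (S 3 (C1) (S 4 (S 5 (C2) (C3)) (C4)))) (S 2 (S 3 (C5) (S 4 (S 19 (C6) (S 29 (C7) (C8))) (C9))) (S 3 (S 4 (C10) (C11)) (C12)))"
lemma Ctop_ok: "chk [0] [] Ctop"
  unfolding Ctop_def by (simp only: chk.simps(2) P0[THEN eqTrueI] P1[THEN eqTrueI] P2[THEN eqTrueI] P3[THEN eqTrueI] P4[THEN eqTrueI] P5[THEN eqTrueI] P6[THEN eqTrueI] P7[THEN eqTrueI] P8[THEN eqTrueI] P9[THEN eqTrueI] P10[THEN eqTrueI] P11[THEN eqTrueI] P12[THEN eqTrueI] simp_thms)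

lemma mem_iff: "mem v xs \<longleftrightarrow> v \<in> set xs"
  by (induct xs) auto

lemma chk_sound:
  "chk R B t \<Longrightarrow> (\<forall>v\<in>set R. c v) \<Longrightarrow> (\<forall>v\<in>set B. \<not> c v) \<Longrightarrow>
   \<exists>cl. isJ5 cl \<and> ((\<forall>v\<in>set cl. c v) \<or> (\<forall>v\<in>set cl. \<not> c v))"
proof (induction t arbitrary: R B)
  case (L cl)
  then show ?case by (auto simp: mem_iff list_all_iff)
next
  case (S v t1 t2)
  show ?case
  proof (cases "c v")
    case True
    then show ?thesis using S.IH(1)[of "v#R" B] S.prems by auto
  next
    case False
    then show ?thesis using S.IH(2)[of R "v#B"] S.prems by auto
  qed
qed

lemma inD_0: "\<not> inD 0" by (simp add: inD_def)

lemma adjb_sym: "adjb i j = adjb j i"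
  by (cases "i = j") (auto simp: adjb_def)

lemma adjb_neq: "adjb i j \<Longrightarrow> i \<noteq> j"
  using inD_0 by (auto simp: adjb_def)

definition Gr :: graph where
  "Gr = ({0..<36}, {e. \<exists>i j. e = {i,j} \<and> i < 36 \<and> j < 36 \<and> adjb i j})"

lemma Gr_simple: "simple_graph Gr"
  unfolding simple_graph_def Gr_def by (auto dest: adjb_neq)

lemma isJ5_D: "isJ5 cl \<Longrightarrow> \<exists>a b c d e. cl = [a,b,c,d,e] \<and> a \<noteq> b \<and> a < 36 \<and> b < 36 \<and> c < 36 \<and> d < 36 \<and> e < 36 \<and>
     adjb a c \<and> adjb a d \<and> adjb a e \<and> adjb b c \<and> adjb b d \<and> adjb b e \<and>
     adjb c d \<and> adjb c e \<and> adjb d e"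
  by (cases cl rule: isJ5.cases) auto

lemma five: "{0..<5::nat} = {0,1,2,3,4}" by auto

lemma edgeGr: "i < 36 \<Longrightarrow> j < 36 \<Longrightarrow> adjb i j \<Longrightarrow> {i,j} \<in> snd Gr"
  unfolding Gr_def by auto

lemma cases5: "(x::nat) < 5 \<Longrightarrow> x = 0 \<or> x = 1 \<or> x = 2 \<or> x = 3 \<or> x = 4"
  by presburger

lemma isJ5_contains:
  assumes "isJ5 cl" "set cl \<subseteq> X"
  shows "contains (induced Gr X) (J 5)"
proof -
  obtain a b c d e where cl: "cl = [a,b,c,d,e]" and h: "a \<noteq> b" "a < 36" "b < 36" "c < 36" "d < 36" "e < 36"
     "adjb a c" "adjb a d" "adjb a e" "adjb b c" "adjb b d" "adjb b e" "adjb c d" "adjb c e" "adjb d e"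
    using isJ5_D[OF assms(1)] by blast
  have X: "a \<in> X" "b \<in> X" "c \<in> X" "d \<in> X" "e \<in> X" using assms(2) cl by auto
  define f where "f = (\<lambda>i::nat. [a,b,c,d,e] ! i)"
  have f: "f 0 = a" "f 1 = b" "f 2 = c" "f 3 = d" "f 4 = e" "f (Suc 0) = b" by (simp_all add: f_def)
  have ne: "a \<noteq> c" "a \<noteq> d" "a \<noteq> e" "b \<noteq> c" "b \<noteq> d" "b \<noteq> e" "c \<noteq> d" "c \<noteq> e" "d \<noteq> e"
    using h(7-15) adjb_neq by blast+
  have sym: "adjb c a" "adjb d a" "adjb e a" "adjb c b" "adjb d b" "adjb e b" "adjb d c" "adjb e c" "adjb e d"
    using h(7-15) adjb_sym by metis+
  have fS: "f x \<in> set [a,b,c,d,e]" if "x < 5" for x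
    unfolding f_def using that by (intro nth_mem) simp
  have fX: "f x \<in> X \<and> f x < 36" if "x < 5" for x
    using fS[OF that] X h(2-6) by auto
  have finj: "x = y" if "x < 5" "y < 5" "f x = f y" for x y
    using cases5[OF that(1)] cases5[OF that(2)] that(3)
    by (elim disjE) (simp_all add: f ne ne[symmetric] h(1) h(1)[symmetric])
  have fadj: "adjb (f x) (f y)" if "x < 5" "y < 5" "x \<noteq> y" "\<not> (x = 0 \<and> y = 1)" "\<not> (x = 1 \<and> y = 0)" for x y
    using cases5[OF that(1)] cases5[OF that(2)] that(3-5)
    by (elim disjE) (simp_all add: f h(7-15) sym)
  have inj: "inj_on f {0..<5}"
    unfolding inj_on_def using finj by auto
  have img: "f ` fst (J 5) \<subseteq> fst (induced Gr X)"
    unfolding J_def induced_def using fX by auto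
  have edges: "\<forall>ed\<in>snd (J 5). f ` ed \<in> snd (induced Gr X)"
  proof
    fix ed assume "ed \<in> snd (J 5)"
    then have ed: "ed \<subseteq> {0..<5}" "card ed = 2" "ed \<noteq> {0,1}" unfolding J_def by auto
    then obtain x y where xy: "ed = {x,y}" "x \<noteq> y" by (auto simp: card_2_iff)
    have xr: "x < 5" "y < 5" using ed(1) xy by auto
    have n01: "\<not> (x = 0 \<and> y = 1)" "\<not> (x = 1 \<and> y = 0)" using ed(3) xy by auto
    have A: "adjb (f x) (f y)" using fadj[OF xr xy(2) n01] .
    have "{f x, f y} \<in> snd Gr" using edgeGr[OF _ _ A] fX[OF xr(1)] fX[OF xr(2)] by blast
    moreover have "{f x, f y} \<subseteq> X" using fX[OF xr(1)] fX[OF xr(2)] by blast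
    ultimately show "f ` ed \<in> snd (induced Gr X)"
      unfolding induced_def using xy by simp
  qed
  show ?thesis unfolding contains_def
    by (rule exI[where x=f]) (use inj img edges in \<open>simp only: J_def fst_conv\<close>)
qed

lemma arrows: "vertex_arrows Gr (J 5) (J 5)"
  unfolding vertex_arrows_def
proof (intro allI impI)
  fix X1 X2 assume H: "X1 \<union> X2 = fst Gr \<and> X1 \<inter> X2 = {}"
  have V: "fst Gr = {0..<36}" by (simp add: Gr_def)
  have key: "\<And>c. c 0 \<Longrightarrow> \<exists>cl. isJ5 cl \<and> ((\<forall>v\<in>set cl. c v) \<or> (\<forall>v\<in>set cl. \<not> c v))"
    using chk_sound[OF Ctop_ok] by auto
  have inV: "isJ5 cl \<Longrightarrow> set cl \<subseteq> {0..<36}" for cl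
    using isJ5_D[of cl] by auto
  show "contains (induced Gr X1) (J 5) \<or> contains (induced Gr X2) (J 5)"
  proof (cases "0 \<in> X1")
    case True
    then obtain cl where cl: "isJ5 cl" "(\<forall>v\<in>set cl. v \<in> X1) \<or> (\<forall>v\<in>set cl. v \<notin> X1)"
      using key[of "\<lambda>v. v \<in> X1"] by auto
    show ?thesis
    proof (cases "\<forall>v\<in>set cl. v \<in> X1")
      case True
      then show ?thesis using isJ5_contains[OF cl(1)] by blast
    next
      case False
      then have "set cl \<subseteq> X2" using cl inV[OF cl(1)] H V by auto
      then show ?thesis using isJ5_contains[OF cl(1)] by blast
    qed
  next
    case False
    then have "0 \<in> X2" using H V by auto
    then obtain cl where cl: "isJ5 cl" "(\<forall>v\<in>set cl. v \<in> X2) \<or> (\<forall>v\<in>set cl. v \<notin> X2)"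
      using key[of "\<lambda>v. v \<in> X2"] by auto
    show ?thesis
    proof (cases "\<forall>v\<in>set cl. v \<in> X2")
      case True
      then show ?thesis using isJ5_contains[OF cl(1)] by blast
    next
      case False
      then have "set cl \<subseteq> X1" using cl inV[OF cl(1)] H V by auto
      then show ?thesis using isJ5_contains[OF cl(1)] by blast
    qed
  qed
qed

fun c4 :: "nat \<Rightarrow> nat \<Rightarrow> nat \<Rightarrow> nat list \<Rightarrow> bool" where
  "c4 x y z [] = True"
| "c4 x y z (w#ws) = ((\<not> (adjb x w \<and> adjb y w \<and> adjb z w)) \<and> c4 x y z ws)"

fun c3 :: "nat \<Rightarrow> nat \<Rightarrow> nat list \<Rightarrow> bool" where
  "c3 x y [] = True"
| "c3 x y (z#zs) = ((if adjb x z \<and> adjb y z then c4 x y z zs else True) \<and> c3 x y zs)"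

fun c2 :: "nat \<Rightarrow> nat list \<Rightarrow> bool" where
  "c2 x [] = True"
| "c2 x (y#ys) = ((if adjb x y then c3 x y ys else True) \<and> c2 x ys)"

fun c1 :: "nat list \<Rightarrow> bool" where
  "c1 [] = True"
| "c1 (x#xs) = (c2 x xs \<and> c1 xs)"

lemma c4_D: "c4 x y z ws \<Longrightarrow> w \<in> set ws \<Longrightarrow> \<not> (adjb x w \<and> adjb y w \<and> adjb z w)"
  by (induct ws) auto

lemma c3_D: "sorted_wrt (<) zs \<Longrightarrow> c3 x y zs \<Longrightarrow> z \<in> set zs \<Longrightarrow> w \<in> set zs \<Longrightarrow> z < w \<Longrightarrow>
    adjb x z \<Longrightarrow> adjb y z \<Longrightarrow> \<not> (adjb x w \<and> adjb y w \<and> adjb z w)"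
proof (induct zs)
  case Nil then show ?case by simp
next
  case (Cons a zs)
  show ?case
  proof (cases "z = a")
    case True
    then have "w \<in> set zs" using Cons.prems by auto
    then show ?thesis using Cons.prems True c4_D by (auto split: if_splits)
  next
    case False
    then have "z \<in> set zs" using Cons.prems by auto
    moreover have "w \<in> set zs" using Cons.prems \<open>z \<in> set zs\<close> by auto
    ultimately show ?thesis using Cons by auto
  qed
qed

lemma c2_D: "sorted_wrt (<) ys \<Longrightarrow> c2 x ys \<Longrightarrow> y \<in> set ys \<Longrightarrow> z \<in> set ys \<Longrightarrow> w \<in> set ys \<Longrightarrow>
    y < z \<Longrightarrow> z < w \<Longrightarrow> adjb x y \<Longrightarrow> adjb x z \<Longrightarrow> adjb y z \<Longrightarrow> \<not> (adjb x w \<and> adjb y w \<and> adjb z w)"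
proof (induct ys)
  case Nil then show ?case by simp
next
  case (Cons a ys)
  show ?case
  proof (cases "y = a")
    case True
    then have "z \<in> set ys" "w \<in> set ys" using Cons.prems by auto
    then show ?thesis using Cons.prems True c3_D[of ys x y z w] by (auto split: if_splits)
  next
    case False
    then have "y \<in> set ys" using Cons.prems by auto
    moreover have "z \<in> set ys" "w \<in> set ys" using Cons.prems \<open>y \<in> set ys\<close> by auto
    ultimately show ?thesis using Cons by auto
  qed
qed

lemma c1_D: "sorted_wrt (<) xs \<Longrightarrow> c1 xs \<Longrightarrow> x \<in> set xs \<Longrightarrow> y \<in> set xs \<Longrightarrow> z \<in> set xs \<Longrightarrow> w \<in> set xs \<Longrightarrow>
    x < y \<Longrightarrow> y < z \<Longrightarrow> z < w \<Longrightarrow> adjb x y \<Longrightarrow> adjb x z \<Longrightarrow> adjb y z \<Longrightarrow> \<not> (adjb x w \<and> adjb y w \<and> adjb z w)"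
proof (induct xs)
  case Nil then show ?case by simp
next
  case (Cons a xs)
  show ?case
  proof (cases "x = a")
    case True
    then have "y \<in> set xs" "z \<in> set xs" "w \<in> set xs" using Cons.prems by auto
    then show ?thesis using Cons.prems True c2_D[of xs x y z w] by auto
  next
    case False
    then have "x \<in> set xs" using Cons.prems by auto
    moreover have "y \<in> set xs" "z \<in> set xs" "w \<in> set xs" using Cons.prems \<open>x \<in> set xs\<close> by auto
    ultimately show ?thesis using Cons by auto
  qed
qed

lemma c1_Dl: "c1 Dl"
  by (simp add: Dl_def adjb_def inD_def)

lemma Dl_sorted: "sorted_wrt (<) Dl"
  by (simp add: Dl_def)

lemma inD_Dl: "inD d \<Longrightarrow> d < 36 \<Longrightarrow> d \<in> set Dl"
  unfolding inD_def Dl_def by (simp split: if_splits; presburger)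

lemma adjb_shift: "a \<le> x \<Longrightarrow> a \<le> y \<Longrightarrow> adjb (x - a) (y - a) = adjb x y"
  unfolding adjb_def by (auto simp: not_le)

lemma noK4_above:
  assumes "a < x" "x < y" "y < z" "z < w" "w < 36"
    "adjb a x" "adjb a y" "adjb a z" "adjb a w"
    "adjb x y" "adjb x z" "adjb x w" "adjb y z" "adjb y w" "adjb z w"
  shows False
proof -
  have D: "x - a \<in> set Dl" "y - a \<in> set Dl" "z - a \<in> set Dl" "w - a \<in> set Dl"
    using assms by (auto intro!: inD_Dl simp: adjb_def)
  have A: "adjb (x - a) (y - a)" "adjb (x - a) (z - a)" "adjb (x - a) (w - a)"
     "adjb (y - a) (z - a)" "adjb (y - a) (w - a)" "adjb (z - a) (w - a)"
    using assms by (simp_all add: adjb_shift)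
  have o: "x - a < y - a" "y - a < z - a" "z - a < w - a" using assms by auto
  show False using c1_D[OF Dl_sorted c1_Dl D o A(1,2,4)] A(3,5,6) by blast
qed

lemma noK5:
  assumes adj: "\<And>u v. u \<in> VS \<Longrightarrow> v \<in> VS \<Longrightarrow> u \<noteq> v \<Longrightarrow> adjb u v"
    and fin: "finite VS" and card: "card VS = 5" and sub: "VS \<subseteq> {0..<36}"
  shows False
proof -
  obtain l where l: "sorted_wrt (<) l" "set l = VS" "length l = card VS"
    using finite_set_strict_sorted[OF fin] by auto
  then obtain a b c d e where le: "l = [a,b,c,d,e]"
    using card by (auto simp: numeral_eq_Suc length_Suc_conv)
  then have o: "a < b" "b < c" "c < d" "d < e" using l(1) by auto
  have m: "a \<in> VS" "b \<in> VS" "c \<in> VS" "d \<in> VS" "e \<in> VS" using l(2) le by auto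
  have "e < 36" using m sub by auto
  have A: "adjb a b" "adjb a c" "adjb a d" "adjb a e" "adjb b c" "adjb b d" "adjb b e"
      "adjb c d" "adjb c e" "adjb d e"
    using adj m o by auto
  show False using noK4_above[OF o \<open>e < 36\<close> A] .
qed

lemma K5free: "\<not> contains Gr (complete 5)"
proof
  assume "contains Gr (complete 5)"
  then obtain f :: "nat \<Rightarrow> nat" where inj: "inj_on f {0..<5}" and img: "f ` {0..<5} \<subseteq> {0..<36}"
    and ed: "\<forall>e\<in>{e. e \<subseteq> {0..<5} \<and> card e = 2}. f ` e \<in> snd Gr"
    unfolding contains_def complete_def Gr_def by auto
  have adj: "adjb (f i) (f j)" if "i < 5" "j < 5" "i \<noteq> j" for i j
  proof -
    have "{i,j} \<in> {e. e \<subseteq> {0..<5} \<and> card e = 2}" using that by auto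
    then have "f ` {i,j} \<in> snd Gr" using ed by blast
    then have "{f i, f j} \<in> snd Gr" by simp
    then obtain p q where "{f i, f j} = {p,q}" "adjb p q" unfolding Gr_def by auto
    then show ?thesis using adjb_sym by (auto simp: doubleton_eq_iff)
  qed
  have c: "card (f ` {0..<5}) = 5" using card_image[OF inj] by simp
  show False
  proof (rule noK5[OF _ _ c img])
    fix u v assume uv: "u \<in> f ` {0..<5}" "v \<in> f ` {0..<5}" "u \<noteq> v"
    then obtain i j where "i < 5" "j < 5" "u = f i" "v = f j" by auto
    then show "adjb u v" using adj uv(3) by blast
  qed simp
qed

theorem mainTheorem5:
  shows "(\<exists>G. simple_graph G \<and> \<not> contains G (complete 5) \<and> vertex_arrows G (J 5) (J 5))
         \<and> Fv (J 5) (J 5) 5 \<le> 36"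
proof
  show ex: "\<exists>G. simple_graph G \<and> \<not> contains G (complete 5) \<and> vertex_arrows G (J 5) (J 5)"
    using Gr_simple K5free arrows by blast
  have "card (fst Gr) = 36" by (simp add: Gr_def)
  then show "Fv (J 5) (J 5) 5 \<le> 36"
    unfolding Fv_def using Gr_simple K5free arrows by (intro Least_le) blast
qed

end
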